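(* For each $m\ge0$ and $k\ge1$ there exists $R$ such that for all $S,T\ge R$, $$X_{S,T}X_{S,T}\equiv^m_k X_{S,T}\,\mathbf{a}\,X_{S,T},$$ where $X_{S,T}=(v^S\mathbf{a}v^S\mathbf{b}v^S)^T$.
   Context: Fix $r,s\ge1$ and the alphabet $B=\{a_1,\dots,a_r,b_1,\dots,b_s,c_1,\dots,c_{2r+2s}\}$. Let $v=c_1a_1c_2\,c_3a_2c_4\cdots c_{2r-1}a_rc_{2r}\,c_{2r+1}b_1c_{2r+2}\cdots c_{2r+2s-1}b_sc_{2r+2s}$, $\mathbf{a}=a_1\cdots a_r$, $\mathbf{b}=b_1\cdots b_s$. For $R>0$, an $R$-word is a word obtained by concatenating factors from $\{\mathbf{a},\mathbf{b},v^R\}$ such that the first and last factors are $v^R$ and among any two consecutive factors at least one is $v^R$ (this factorization is unique). For $R>2m$, the $m$-neighborhoods of an $R$-word are: each factor $v^m\mathbf{a}v^m$ or $v^m\mathbf{b}v^m$ surrounding one of the factors $\mathbf{a}$ or $\mathbf{b}$ of the factorization, together with the prefix $v^m$ and the suffix $v^m$ of the word. Marked $R$-words $(w_1,i_1),(w_2,i_2)$ are $\equiv^m_0$-equivalent if $w_1(i_1)=w_2(i_2)$ and either $i_1,i_2$ lie at the same position within identical $m$-neighborhoods, or neither lies in any $m$-neighborhood. The basic game on marked words: in each round Player 1 picks one word and moves its pebble to a different position; Player 2 must move the pebble in the other word in the same direction, onto the same letter, such that the set of letters strictly jumped over is the same in both words. The $m$-enhanced game additionally requires that after every round the current marked words are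 $\equiv^m_0$-equivalent. For unmarked $R$-words $w_1,w_2$, $w_1\equiv^m_k w_2$ means Player 2 has a winning strategy in the $k$-round $m$-enhanced game in which, in the first round, Player 1 places a pebble on a position of either word and Player 2 responds in the other so that the resulting marked words are $\equiv^m_0$-equivalent, after which $k-1$ further rounds of the $m$-enhanced game are played; Player 2 wins if she responds legally in every round. *)

theory Defs
  imports Main
begin

text \<open>Letters of the alphabet B: LA i = a_i (1..r), LB j = b_j (1..s), LC k = c_k (1..2r+2s).
  Words are lists of letters; positions are 0-indexed.\<close>
datatype letter = LA nat | LB nat | LC nat

definition wpow :: "letter list \<Rightarrow> nat \<Rightarrow> letter list" where
  "wpow w n = concat (replicate n w)"

definition vword :: "nat \<Rightarrow> nat \<Rightarrow> letter list" where
  "vword r s =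
     concat (map (\<lambda>i. [LC (2*i - 1), LA i, LC (2*i)]) [1..<r+1]) @
     concat (map (\<lambda>j. [LC (2*r + 2*j - 1), LB j, LC (2*r + 2*j)]) [1..<s+1])"

definition boldA :: "nat \<Rightarrow> letter list" where
  "boldA r = map LA [1..<r+1]"

definition boldB :: "nat \<Rightarrow> letter list" where
  "boldB s = map LB [1..<s+1]"

definition Rfact :: "nat \<Rightarrow> nat \<Rightarrow> nat \<Rightarrow> letter list list \<Rightarrow> bool" where
  "Rfact r s R fs \<longleftrightarrow>
     fs \<noteq> [] \<and> hd fs = wpow (vword r s) R \<and> last fs = wpow (vword r s) R \<and>
     set fs \<subseteq> {boldA r, boldB s, wpow (vword r s) R} \<and>
     (\<forall>q. Suc q < length fs \<longrightarrow>
        fs ! q = wpow (vword r s) R \<or> fs ! Suc q = wpow (vword r s) R)"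

definition is_Rword :: "nat \<Rightarrow> nat \<Rightarrow> nat \<Rightarrow> letter list \<Rightarrow> bool" where
  "is_Rword r s R w \<longleftrightarrow> (\<exists>fs. Rfact r s R fs \<and> concat fs = w)"

definition the_fact :: "nat \<Rightarrow> nat \<Rightarrow> nat \<Rightarrow> letter list \<Rightarrow> letter list list" where
  "the_fact r s R w = (THE fs. Rfact r s R fs \<and> concat fs = w)"

datatype nkind = NPre | NMid | NSuf

text \<open>m-neighborhoods of an R-word, as triples (kind, start position, content word):
  the prefix v^m, the suffix v^m, and v^m f v^m around each factor f in {a, b}.\<close>
definition nbhds :: "nat \<Rightarrow> nat \<Rightarrow> nat \<Rightarrow> nat \<Rightarrow> letter list \<Rightarrow> (nkind \<times> nat \<times> letter list) set" where
  "nbhds r s R m w =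
     (let fs = the_fact r s R w; vm = wpow (vword r s) m in
      {(NPre, 0, vm), (NSuf, length w - length vm, vm)} \<union>
      {(NMid, length (concat (take q fs)) - length vm, vm @ fs ! q @ vm) | q.
          q < length fs \<and> (fs ! q = boldA r \<or> fs ! q = boldB s)})"

definition in_nb :: "nat \<Rightarrow> nat \<times> letter list \<Rightarrow> bool" where
  "in_nb i pu \<longleftrightarrow> fst pu \<le> i \<and> i < fst pu + length (snd pu)"

definition eq0 :: "nat \<Rightarrow> nat \<Rightarrow> nat \<Rightarrow> nat \<Rightarrow> letter list \<Rightarrow> nat \<Rightarrow> letter list \<Rightarrow> nat \<Rightarrow> bool" where
  "eq0 r s R m w1 i1 w2 i2 \<longleftrightarrow>
     w1 ! i1 = w2 ! i2 \<and>
     ((\<exists>k p1 p2 u. (k, p1, u) \<in> nbhds r s R m w1 \<and> (k, p2, u) \<in> nbhds r s R m w2 \<and>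
          in_nb i1 (p1, u) \<and> in_nb i2 (p2, u) \<and> i1 - p1 = i2 - p2) \<or>
      ((\<forall>k p u. (k, p, u) \<in> nbhds r s R m w1 \<longrightarrow> \<not> in_nb i1 (p, u)) \<and>
       (\<forall>k p u. (k, p, u) \<in> nbhds r s R m w2 \<longrightarrow> \<not> in_nb i2 (p, u))))"

definition jumped :: "letter list \<Rightarrow> nat \<Rightarrow> nat \<Rightarrow> letter set" where
  "jumped w i j = {w ! l | l. min i j < l \<and> l < max i j}"

text \<open>Legal answer of Player 2: pebble in w2 moves from i2 to j2, answering the move i1 \<rightarrow> j1 in w1.\<close>
definition answers :: "letter list \<Rightarrow> nat \<Rightarrow> nat \<Rightarrow> letter list \<Rightarrow> nat \<Rightarrow> nat \<Rightarrow> bool" where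
  "answers w1 i1 j1 w2 i2 j2 \<longleftrightarrow>
     j2 < length w2 \<and> j2 \<noteq> i2 \<and> (i1 < j1 \<longleftrightarrow> i2 < j2) \<and> w2 ! j2 = w1 ! j1 \<and>
     jumped w2 i2 j2 = jumped w1 i1 j1"

fun wins :: "nat \<Rightarrow> nat \<Rightarrow> nat \<Rightarrow> nat \<Rightarrow> nat \<Rightarrow> letter list \<Rightarrow> nat \<Rightarrow> letter list \<Rightarrow> nat \<Rightarrow> bool" where
  "wins r s R m 0 w1 i1 w2 i2 = True"
| "wins r s R m (Suc n) w1 i1 w2 i2 =
     ((\<forall>j1. j1 < length w1 \<and> j1 \<noteq> i1 \<longrightarrow>
        (\<exists>j2. answers w1 i1 j1 w2 i2 j2 \<and> eq0 r s R m w1 j1 w2 j2 \<and> wins r s R m n w1 j1 w2 j2)) \<and>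
      (\<forall>j2. j2 < length w2 \<and> j2 \<noteq> i2 \<longrightarrow>
        (\<exists>j1. answers w2 i2 j2 w1 i1 j1 \<and> eq0 r s R m w1 j1 w2 j2 \<and> wins r s R m n w1 j1 w2 j2)))"

text \<open>w1 \<equiv>^m_k w2 for unmarked R-words: first round is the pebble placement, then k-1 further rounds.\<close>
definition eqk :: "nat \<Rightarrow> nat \<Rightarrow> nat \<Rightarrow> nat \<Rightarrow> nat \<Rightarrow> letter list \<Rightarrow> letter list \<Rightarrow> bool" where
  "eqk r s R m k w1 w2 \<longleftrightarrow>
     (\<forall>i1 < length w1. \<exists>i2 < length w2. eq0 r s R m w1 i1 w2 i2 \<and> wins r s R m (k - 1) w1 i1 w2 i2) \<and>
     (\<forall>i2 < length w2. \<exists>i1 < length w1. eq0 r s R m w1 i1 w2 i2 \<and> wins r s R m (k - 1) w1 i1 w2 i2)"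

definition Xword :: "nat \<Rightarrow> nat \<Rightarrow> nat \<Rightarrow> nat \<Rightarrow> letter list" where
  "Xword r s S T =
     wpow (wpow (vword r s) S @ boldA r @ wpow (vword r s) S @ boldB s @ wpow (vword r s) S) T"

end

theory Submission
  imports Defs
begin

datatype usym = UV | UA | UB

definition emb :: "nat \<Rightarrow> nat \<Rightarrow> usym \<Rightarrow> letter list" where
  "emb r s x = (case x of UV \<Rightarrow> vword r s | UA \<Rightarrow> boldA r | UB \<Rightarrow> boldB s)"

definition W :: "nat \<Rightarrow> nat \<Rightarrow> usym list \<Rightarrow> letter list" where
  "W r s U = concat (map (emb r s) U)"

definition pos :: "nat \<Rightarrow> nat \<Rightarrow> usym list \<Rightarrow> nat \<Rightarrow> nat" where
  "pos r s U j = length (W r s (take j U))"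

lemma W_append[simp]: "W r s (A @ B) = W r s A @ W r s B" by (simp add: W_def)
lemma W_Cons[simp]: "W r s (x # B) = emb r s x @ W r s B" by (simp add: W_def)
lemma W_Nil[simp]: "W r s [] = []" by (simp add: W_def)


locale rs = fixes r s :: nat assumes r1: "r \<ge> 1" and s1: "s \<ge> 1"
begin

lemma v_ne: "vword r s \<noteq> []"
  using r1 by (simp add: vword_def upt_conv_Cons del: upt_Suc)

lemma hd_v: "hd (vword r s) = LC 1"
  using r1 by (simp add: vword_def upt_conv_Cons del: upt_Suc)

lemma A_ne: "boldA r \<noteq> []" using r1 by (simp add: boldA_def)
lemma B_ne: "boldB s \<noteq> []" using s1 by (simp add: boldB_def)
lemma hd_A: "hd (boldA r) = LA 1" using r1 by (simp add: boldA_def upt_conv_Cons del: upt_Suc)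
lemma hd_B: "hd (boldB s) = LB 1" using s1 by (simp add: boldB_def upt_conv_Cons del: upt_Suc)

lemma emb_ne: "emb r s x \<noteq> []"
  using v_ne A_ne B_ne by (cases x) (auto simp: emb_def)

lemma set_A: "set (boldA r) \<subseteq> set (vword r s)"
  by (auto simp: boldA_def vword_def)
lemma set_B: "set (boldB s) \<subseteq> set (vword r s)"
  by (auto simp: boldB_def vword_def)

lemma set_emb: "set (emb r s x) \<subseteq> set (vword r s)"
  using set_A set_B by (cases x) (auto simp: emb_def)

lemma set_W: "set (W r s U) \<subseteq> set (vword r s)"
  using set_emb by (auto simp: W_def)

lemma emb_len_pos: "0 < length (emb r s x)" using emb_ne by simp

lemma W_take_drop: "W r s U = W r s (take j U) @ W r s (drop j U)"
  by (metis W_append append_take_drop_id)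

lemma len_W: "length (W r s U) = pos r s U (length U)" by (simp add: pos_def)

lemma pos_Suc: "j < length U \<Longrightarrow> pos r s U (Suc j) = pos r s U j + length (emb r s (U ! j))"
  by (simp add: pos_def take_Suc_conv_app_nth)

lemma pos_add: "pos r s U (j + l) = pos r s U j + length (W r s (take l (drop j U)))"
  by (simp add: pos_def take_add)

lemma pos_mono: "j \<le> j' \<Longrightarrow> pos r s U j \<le> pos r s U j'"
  using pos_add[of U j "j' - j"] by simp

lemma pos_Suc_le: assumes "j < length U" "j < j'" shows "pos r s U j + length (emb r s (U ! j)) \<le> pos r s U j'"
  using pos_Suc[of j U] pos_mono[of "Suc j" j' U] assms by simp

lemma W_nth: "j < length U \<Longrightarrow> o' < length (emb r s (U ! j)) \<Longrightarrow>
   W r s U ! (pos r s U j + o') = emb r s (U ! j) ! o'"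
proof -
  assume a: "j < length U" "o' < length (emb r s (U ! j))"
  have "U = take j U @ U ! j # drop (Suc j) U" using a by (simp add: id_take_nth_drop)
  hence "W r s U = W r s (take j U) @ emb r s (U ! j) @ W r s (drop (Suc j) U)"
    by (metis W_Cons W_append)
  thus ?thesis using a by (simp add: pos_def nth_append)
qed

lemma decomp: "q < length (W r s U) \<Longrightarrow> \<exists>j o'. j < length U \<and> o' < length (emb r s (U ! j)) \<and> q = pos r s U j + o'"
proof (induction U arbitrary: q)
  case Nil thus ?case by simp
next
  case (Cons x U)
  show ?case
  proof (cases "q < length (emb r s x)")
    case True thus ?thesis by (intro exI[of _ 0] exI[of _ q]) (simp add: pos_def)
  next
    case False
    have "q - length (emb r s x) < length (W r s U)" using Cons.prems False by simp
    then obtain j o' where "j < length U" "o' < length (emb r s (U ! j))"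
      "q - length (emb r s x) = pos r s U j + o'" using Cons.IH by blast
    thus ?thesis using False
      by (intro exI[of _ "Suc j"] exI[of _ o']) (simp add: pos_def)
  qed
qed

lemma pos_lt_len: "j < length U \<Longrightarrow> o' < length (emb r s (U ! j)) \<Longrightarrow> pos r s U j + o' < length (W r s U)"
  using pos_Suc[of j U] pos_mono[of "Suc j" "length U" U] len_W[of U] by simp

lemma pos_less_iff:
  assumes "j < length U" "o1 < length (emb r s (U ! j))" "j' < length U" "o2 < length (emb r s (U ! j'))"
  shows "pos r s U j + o1 < pos r s U j' + o2 \<longleftrightarrow> (j < j' \<or> (j = j' \<and> o1 < o2))"
proof -
  have "j < j' \<Longrightarrow> pos r s U j + o1 < pos r s U j' + o2" using pos_Suc_le[of j U j'] assms by simp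
  moreover have "j' < j \<Longrightarrow> pos r s U j' + o2 < pos r s U j + o1" using pos_Suc_le[of j' U j] assms by simp
  ultimately show ?thesis by (cases j j' rule: linorder_cases) auto
qed

lemma pos_eq_iff:
  assumes "j < length U" "o1 < length (emb r s (U ! j))" "j' < length U" "o2 < length (emb r s (U ! j'))"
  shows "pos r s U j + o1 = pos r s U j' + o2 \<longleftrightarrow> (j = j' \<and> o1 = o2)"
  using pos_less_iff[OF assms] pos_less_iff[OF assms(3,4,1,2)] by (metis nat_neq_iff)

lemma shift:
  assumes "take c (drop x1 U) = take c (drop x2 U')" "x1 + c \<le> length U" "x2 + c \<le> length U'"
  shows "\<forall>l \<le> c. pos r s U (x1 + l) - pos r s U x1 = pos r s U' (x2 + l) - pos r s U' x2"
    and "\<forall>d < pos r s U (x1 + c) - pos r s U x1. W r s U ! (pos r s U x1 + d) = W r s U' ! (pos r s U' x2 + d)"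
proof -
  show "\<forall>l \<le> c. pos r s U (x1 + l) - pos r s U x1 = pos r s U' (x2 + l) - pos r s U' x2"
  proof (intro allI impI)
    fix l assume "l \<le> c"
    hence "take l (drop x1 U) = take l (drop x2 U')" using assms(1)
      by (metis min.absorb1 take_take)
    thus "pos r s U (x1 + l) - pos r s U x1 = pos r s U' (x2 + l) - pos r s U' x2"
      by (simp add: pos_add)
  qed
  show "\<forall>d < pos r s U (x1 + c) - pos r s U x1. W r s U ! (pos r s U x1 + d) = W r s U' ! (pos r s U' x2 + d)"
  proof (intro allI impI)
    fix d assume d: "d < pos r s U (x1 + c) - pos r s U x1"
    let ?L = "W r s (take c (drop x1 U))"
    have dL: "d < length ?L" using d by (simp add: pos_add)
    have e1: "W r s U ! (pos r s U x1 + d) = W r s (drop x1 U) ! d"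
      using W_take_drop[of U x1] by (simp add: pos_def nth_append)
    have e2: "W r s U' ! (pos r s U' x2 + d) = W r s (drop x2 U') ! d"
      using W_take_drop[of U' x2] by (simp add: pos_def nth_append)
    have "W r s (drop x1 U) ! d = ?L ! d"
      using W_take_drop[of "drop x1 U" c] dL by (metis nth_append)
    moreover have "W r s (drop x2 U') ! d = ?L ! d"
      using W_take_drop[of "drop x2 U'" c] dL assms(1) by (metis nth_append)
    ultimately show "W r s U ! (pos r s U x1 + d) = W r s U' ! (pos r s U' x2 + d)" using e1 e2 by simp
  qed
qed

lemma jumped_full:
  assumes "j < l" "l < j'" "j' < length U" "U ! l = UV"
    "o1 < length (emb r s (U ! j))" "o2 < length (emb r s (U ! j'))"
  shows "jumped (W r s U) (pos r s U j + o1) (pos r s U j' + o2) = set (vword r s)"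
proof
  have lt: "pos r s U j + o1 < pos r s U j' + o2" using pos_less_iff assms by auto
  show "jumped (W r s U) (pos r s U j + o1) (pos r s U j' + o2) \<subseteq> set (vword r s)"
  proof
    fix y assume "y \<in> jumped (W r s U) (pos r s U j + o1) (pos r s U j' + o2)"
    then obtain i where "y = W r s U ! i" "i < pos r s U j' + o2" using lt by (auto simp: jumped_def)
    moreover have "pos r s U j' + o2 < length (W r s U)" using pos_lt_len assms by simp
    ultimately show "y \<in> set (vword r s)" using set_W by (meson nth_mem order.strict_trans subsetD)
  qed
  show "set (vword r s) \<subseteq> jumped (W r s U) (pos r s U j + o1) (pos r s U j' + o2)"
  proof
    fix y assume "y \<in> set (vword r s)"
    then obtain t where t: "t < length (vword r s)" "y = vword r s ! t" by (metis in_set_conv_nth)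
    have em: "emb r s (U ! l) = vword r s" using assms by (simp add: emb_def)
    have l1: "pos r s U j + o1 < pos r s U l + t" using pos_less_iff[of j U o1 l t] assms t em by simp
    have l2: "pos r s U l + t < pos r s U j' + o2" using pos_less_iff[of l U t j' o2] assms t em by simp
    have "W r s U ! (pos r s U l + t) = y" using W_nth[of l U t] assms t em by simp
    thus "y \<in> jumped (W r s U) (pos r s U j + o1) (pos r s U j' + o2)"
      using l1 l2 unfolding jumped_def by (intro CollectI exI[of _ "pos r s U l + t"]) simp
  qed
qed

end

datatype fsym = FV | FA | FB

definition femb :: "nat \<Rightarrow> nat \<Rightarrow> nat \<Rightarrow> fsym \<Rightarrow> letter list" where
  "femb r s S x = (case x of FV \<Rightarrow> wpow (vword r s) S | FA \<Rightarrow> boldA r | FB \<Rightarrow> boldB s)"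

definition expand :: "nat \<Rightarrow> fsym \<Rightarrow> usym list" where
  "expand S x = (case x of FV \<Rightarrow> replicate S UV | FA \<Rightarrow> [UA] | FB \<Rightarrow> [UB])"

definition UU :: "nat \<Rightarrow> fsym list \<Rightarrow> usym list" where
  "UU S fl = concat (map (expand S) fl)"

lemma W_replicate: "W r s (replicate n UV) = wpow (vword r s) n"
  by (induction n) (auto simp: wpow_def emb_def)

lemma W_expand: "W r s (expand S x) = femb r s S x"
  by (cases x) (auto simp: expand_def femb_def W_replicate emb_def)

lemma W_UU: "W r s (UU S fl) = concat (map (femb r s S) fl)"
  by (induction fl) (auto simp: UU_def W_expand)

lemma UU_Cons[simp]: "UU S (x # fl) = expand S x @ UU S fl" by (simp add: UU_def)
lemma UU_Nil[simp]: "UU S [] = []" by (simp add: UU_def)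

definition okV :: "fsym list \<Rightarrow> bool" where
  "okV fl \<longleftrightarrow> (\<forall>q. Suc q < length fl \<longrightarrow> fl ! q = FV \<or> fl ! Suc q = FV)"

lemma okV_append:
  assumes "okV xs" "okV ys" "xs \<noteq> []" "ys \<noteq> []" "last xs = FV \<or> hd ys = FV"
  shows "okV (xs @ ys)"
  unfolding okV_def
proof (intro allI impI)
  fix q assume q: "Suc q < length (xs @ ys)"
  consider "Suc q < length xs" | "Suc q = length xs" | "q \<ge> length xs" by linarith
  thus "(xs @ ys) ! q = FV \<or> (xs @ ys) ! Suc q = FV"
  proof cases
    case 1 thus ?thesis using assms(1) by (simp add: okV_def nth_append)
  next
    case 2
    have "q = length xs - 1" using 2 by simp
    hence "xs ! q = last xs" using assms(3) by (simp add: last_conv_nth)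
    moreover have "ys ! 0 = hd ys" using assms(4) by (simp add: hd_conv_nth)
    ultimately show ?thesis using 2 assms(5) by (simp add: nth_append)
  next
    case 3
    have "Suc (q - length xs) < length ys" using q 3 by simp
    hence "ys ! (q - length xs) = FV \<or> ys ! Suc (q - length xs) = FV" using assms(2) by (simp add: okV_def)
    moreover have "Suc q - length xs = Suc (q - length xs)" using 3 by simp
    ultimately show ?thesis using 3 by (simp add: nth_append)
  qed
qed

context rs
begin

lemma hd_wpow: "S \<ge> 1 \<Longrightarrow> hd (wpow (vword r s) S) = LC 1"
  using hd_v v_ne by (cases S) (auto simp: wpow_def)

lemma wpow_ne: "S \<ge> 1 \<Longrightarrow> wpow (vword r s) S \<noteq> []"
  using v_ne by (cases S) (auto simp: wpow_def)

lemma hd_femb: "S \<ge> 1 \<Longrightarrow> hd (femb r s S x) = (case x of FV \<Rightarrow> LC 1 | FA \<Rightarrow> LA 1 | FB \<Rightarrow> LB 1)"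
  using hd_wpow hd_A hd_B by (cases x) (auto simp: femb_def)

lemma femb_inj: "S \<ge> 1 \<Longrightarrow> femb r s S x = femb r s S y \<longleftrightarrow> x = y"
proof
  assume "S \<ge> 1" "femb r s S x = femb r s S y"
  hence "(case x of FV \<Rightarrow> LC 1 | FA \<Rightarrow> LA 1 | FB \<Rightarrow> LB 1) = (case y of FV \<Rightarrow> LC 1 | FA \<Rightarrow> LA 1 | FB \<Rightarrow> LB 1)"
    using hd_femb by metis
  thus "x = y" by (cases x; cases y) auto
qed simp

lemma fact_unique:
  assumes S: "S \<ge> 1"
  shows "set fs1 \<subseteq> {boldA r, boldB s, wpow (vword r s) S} \<Longrightarrow> set fs2 \<subseteq> {boldA r, boldB s, wpow (vword r s) S}
    \<Longrightarrow> concat fs1 = concat fs2 \<Longrightarrow> fs1 = fs2"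
proof (induction fs1 arbitrary: fs2)
  case Nil
  thus ?case using A_ne B_ne wpow_ne[OF S] by (cases fs2) auto
next
  case (Cons x fs1)
  show ?case
  proof (cases "fs2 = []")
    case True thus ?thesis using Cons.prems A_ne B_ne wpow_ne[OF S] by auto
  next
    case False
    then obtain y fs2' where Cons2: "fs2 = y # fs2'" by (meson neq_Nil_conv)
    have xne: "x \<noteq> []" "y \<noteq> []" using Cons.prems Cons2 A_ne B_ne wpow_ne[OF S] by auto
    have "hd (x @ concat fs1) = hd (y @ concat fs2')" using Cons.prems Cons2 by simp
    hence "hd x = hd y" using xne by simp
    hence xy: "x = y" using Cons.prems Cons2 hd_A hd_B hd_wpow[OF S] by auto
    hence "concat fs1 = concat fs2'" using Cons.prems Cons2 by simp
    thus ?thesis using Cons.IH Cons.prems Cons2 xy by auto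
  qed
qed

lemma Rfact_fl:
  assumes S: "S \<ge> 1" and fl: "fl \<noteq> []" "hd fl = FV" "last fl = FV" "okV fl"
  shows "Rfact r s S (map (femb r s S) fl)"
proof -
  have e: "\<And>x. femb r s S x = wpow (vword r s) S \<longleftrightarrow> x = FV"
    using femb_inj[OF S, of _ FV] by (simp add: femb_def)
  show ?thesis unfolding Rfact_def
    using fl e by (auto simp: hd_map last_map femb_def okV_def split: fsym.splits)
qed

lemma the_fact_fl:
  assumes S: "S \<ge> 1" and fl: "fl \<noteq> []" "hd fl = FV" "last fl = FV" "okV fl"
  shows "the_fact r s S (W r s (UU S fl)) = map (femb r s S) fl"
  unfolding the_fact_def
proof (rule the_equality)
  show "Rfact r s S (map (femb r s S) fl) \<and> concat (map (femb r s S) fl) = W r s (UU S fl)"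
    using Rfact_fl[OF assms] W_UU by simp
  fix fs assume "Rfact r s S fs \<and> concat fs = W r s (UU S fl)"
  moreover have "set (map (femb r s S) fl) \<subseteq> {boldA r, boldB s, wpow (vword r s) S}"
    by (auto simp: femb_def split: fsym.splits)
  ultimately show "fs = map (femb r s S) fl"
    using fact_unique[OF S, of fs "map (femb r s S) fl"] W_UU by (auto simp: Rfact_def)
qed

definition Fs :: "nat \<Rightarrow> fsym list \<Rightarrow> (nat \<times> letter list) set" where
  "Fs S fl = {(length (concat (take q (map (femb r s S) fl))), femb r s S (fl ! q)) | q. q < length fl \<and> fl ! q \<noteq> FV}"

definition Us :: "usym list \<Rightarrow> (nat \<times> letter list) set" where
  "Us U = {(pos r s U j, emb r s (U ! j)) | j. j < length U \<and> U ! j \<noteq> UV}"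

lemma Fs_Nil: "Fs S [] = {}" by (simp add: Fs_def)

lemma mem_Fs_Cons: "(p, f) \<in> Fs S (x # fl) \<longleftrightarrow>
   (x \<noteq> FV \<and> p = 0 \<and> f = femb r s S x) \<or> (length (femb r s S x) \<le> p \<and> (p - length (femb r s S x), f) \<in> Fs S fl)"
proof
  assume "(p, f) \<in> Fs S (x # fl)"
  then obtain q where q: "q < length (x # fl)" "(x # fl) ! q \<noteq> FV"
    "p = length (concat (take q (map (femb r s S) (x # fl))))" "f = femb r s S ((x # fl) ! q)"
    by (auto simp: Fs_def)
  show "(x \<noteq> FV \<and> p = 0 \<and> f = femb r s S x) \<or> (length (femb r s S x) \<le> p \<and> (p - length (femb r s S x), f) \<in> Fs S fl)"
  proof (cases q)
    case 0 thus ?thesis using q by simp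
  next
    case (Suc q')
    thus ?thesis using q unfolding Fs_def by auto
  qed
next
  assume "(x \<noteq> FV \<and> p = 0 \<and> f = femb r s S x) \<or> (length (femb r s S x) \<le> p \<and> (p - length (femb r s S x), f) \<in> Fs S fl)"
  thus "(p, f) \<in> Fs S (x # fl)"
  proof
    assume "x \<noteq> FV \<and> p = 0 \<and> f = femb r s S x"
    thus ?thesis unfolding Fs_def by (intro CollectI exI[of _ 0]) auto
  next
    assume a: "length (femb r s S x) \<le> p \<and> (p - length (femb r s S x), f) \<in> Fs S fl"
    then obtain q where q: "q < length fl" "fl ! q \<noteq> FV"
      "p - length (femb r s S x) = length (concat (take q (map (femb r s S) fl)))" "f = femb r s S (fl ! q)"
      by (auto simp: Fs_def)
    show ?thesis unfolding Fs_def using a q by (intro CollectI exI[of _ "Suc q"]) auto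
  qed
qed

lemma mem_Us_app: "(p, f) \<in> Us (A @ B) \<longleftrightarrow>
   (p, f) \<in> Us A \<or> (length (W r s A) \<le> p \<and> (p - length (W r s A), f) \<in> Us B)"
proof
  assume "(p, f) \<in> Us (A @ B)"
  then obtain j where j: "j < length (A @ B)" "(A @ B) ! j \<noteq> UV" "p = pos r s (A @ B) j" "f = emb r s ((A @ B) ! j)"
    by (auto simp: Us_def)
  show "(p, f) \<in> Us A \<or> (length (W r s A) \<le> p \<and> (p - length (W r s A), f) \<in> Us B)"
  proof (cases "j < length A")
    case True
    thus ?thesis using j unfolding Us_def by (auto simp: pos_def nth_append)
  next
    case False
    hence "pos r s (A @ B) j = length (W r s A) + pos r s B (j - length A)"
      by (simp add: pos_def)
    thus ?thesis using j False unfolding Us_def by (auto simp: nth_append)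
  qed
next
  assume "(p, f) \<in> Us A \<or> (length (W r s A) \<le> p \<and> (p - length (W r s A), f) \<in> Us B)"
  thus "(p, f) \<in> Us (A @ B)"
  proof
    assume "(p, f) \<in> Us A"
    then obtain j where j: "j < length A" "A ! j \<noteq> UV" "p = pos r s A j" "f = emb r s (A ! j)"
      by (auto simp: Us_def)
    show ?thesis unfolding Us_def using j by (intro CollectI exI[of _ j]) (auto simp: pos_def nth_append)
  next
    assume a: "length (W r s A) \<le> p \<and> (p - length (W r s A), f) \<in> Us B"
    then obtain j where j: "j < length B" "B ! j \<noteq> UV" "p - length (W r s A) = pos r s B j" "f = emb r s (B ! j)"
      by (auto simp: Us_def)
    have "pos r s (A @ B) (length A + j) = length (W r s A) + pos r s B j" by (simp add: pos_def)
    thus ?thesis unfolding Us_def using j a by (intro CollectI exI[of _ "length A + j"]) (auto simp: nth_append)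
  qed
qed

lemma Us_expand: "(p, f) \<in> Us (expand S x) \<longleftrightarrow> x \<noteq> FV \<and> p = 0 \<and> f = femb r s S x"
  by (cases x) (auto simp: Us_def expand_def femb_def emb_def pos_def)

lemma Fs_Us: "(p, f) \<in> Fs S fl \<longleftrightarrow> (p, f) \<in> Us (UU S fl)"
proof (induction fl arbitrary: p)
  case Nil thus ?case by (simp add: Fs_def Us_def)
next
  case (Cons x fl)
  show ?case unfolding mem_Fs_Cons UU_Cons mem_Us_app Us_expand W_expand Cons.IH by simp
qed

lemma nbhds_char:
  assumes S: "S \<ge> 1" and fl: "fl \<noteq> []" "hd fl = FV" "last fl = FV" "okV fl"
  shows "nbhds r s S m (W r s (UU S fl)) =
    {(NPre, 0, wpow (vword r s) m), (NSuf, length (W r s (UU S fl)) - length (wpow (vword r s) m), wpow (vword r s) m)} \<union>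
    {(NMid, pos r s (UU S fl) j - length (wpow (vword r s) m), wpow (vword r s) m @ emb r s (UU S fl ! j) @ wpow (vword r s) m) | j.
       j < length (UU S fl) \<and> UU S fl ! j \<noteq> UV}" (is "?L = ?A \<union> ?B")
proof -
  let ?vm = "wpow (vword r s) m"
  let ?fs = "map (femb r s S) fl"
  have tf: "the_fact r s S (W r s (UU S fl)) = ?fs" using the_fact_fl[OF assms] .
  have c: "\<And>q. q < length fl \<Longrightarrow> (?fs ! q = boldA r \<or> ?fs ! q = boldB s) \<longleftrightarrow> fl ! q \<noteq> FV"
  proof -
    have "wpow (vword r s) S \<noteq> boldA r" "wpow (vword r s) S \<noteq> boldB s" "boldA r \<noteq> boldB s"
      using femb_inj[OF S, of FV FA] femb_inj[OF S, of FV FB] femb_inj[OF S, of FA FB] by (auto simp: femb_def)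
    thus "\<And>q. q < length fl \<Longrightarrow> (?fs ! q = boldA r \<or> ?fs ! q = boldB s) \<longleftrightarrow> fl ! q \<noteq> FV"
      by (auto simp: femb_def split: fsym.splits)
  qed
  have M: "{(NMid, length (concat (take q ?fs)) - length ?vm, ?vm @ ?fs ! q @ ?vm) | q.
          q < length ?fs \<and> (?fs ! q = boldA r \<or> ?fs ! q = boldB s)}
        = (\<lambda>(p, f). (NMid, p - length ?vm, ?vm @ f @ ?vm)) ` Fs S fl"
  proof -
    let ?Q = "{q. q < length fl \<and> fl ! q \<noteq> FV}"
    have e1: "Fs S fl = (\<lambda>q. (length (concat (take q ?fs)), femb r s S (fl ! q))) ` ?Q"
      unfolding Fs_def by blast
    have e2: "{(NMid, length (concat (take q ?fs)) - length ?vm, ?vm @ ?fs ! q @ ?vm) | q.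
          q < length ?fs \<and> (?fs ! q = boldA r \<or> ?fs ! q = boldB s)}
        = (\<lambda>q. (NMid, length (concat (take q ?fs)) - length ?vm, ?vm @ ?fs ! q @ ?vm)) ` ?Q"
    proof -
      have "{q. q < length ?fs \<and> (?fs ! q = boldA r \<or> ?fs ! q = boldB s)} = ?Q" using c by (metis (no_types, lifting) length_map nth_map)
      thus ?thesis by blast
    qed
    show ?thesis unfolding e1 e2 image_image by (intro image_cong) auto
  qed
  have N: "?B = (\<lambda>(p, f). (NMid, p - length ?vm, ?vm @ f @ ?vm)) ` Us (UU S fl)"
    unfolding Us_def by auto
  have FU: "Fs S fl = Us (UU S fl)" using Fs_Us by auto
  show ?thesis unfolding nbhds_def tf Let_def M N FU by simp
qed

end

definition Dn :: "nat \<Rightarrow> nat \<Rightarrow> nat" where "Dn m n = 2 * m + 2 + 2 * n"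
definition pp :: "nat \<Rightarrow> nat" where "pp S = 3 * S + 2"
definition En :: "nat \<Rightarrow> nat \<Rightarrow> nat \<Rightarrow> nat \<Rightarrow> nat" where
  "En S m k n = (n + 1) * (3 * pp S + Dn m k + 4)"
definition Pn :: "nat \<Rightarrow> nat \<Rightarrow> usym" where
  "Pn S i = (if i = S then UA else if i = 2 * S + 1 then UB else UV)"

definition win :: "nat \<Rightarrow> usym list \<Rightarrow> nat \<Rightarrow> int \<Rightarrow> usym option" where
  "win D U j = (\<lambda>l. if \<bar>l\<bar> \<le> int D \<and> 0 \<le> int j + l \<and> int j + l < int (length U)
      then Some (U ! nat (int j + l)) else None)"

definition perwin :: "nat \<Rightarrow> nat \<Rightarrow> nat \<Rightarrow> int \<Rightarrow> usym option" where
  "perwin S D \<rho> = (\<lambda>l. if \<bar>l\<bar> \<le> int D then Some (Pn S (nat ((int \<rho> + l) mod int (pp S)))) else None)"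

definition NB :: "nat \<Rightarrow> nat \<Rightarrow> nat \<Rightarrow> usym list \<Rightarrow> (nkind \<times> nat \<times> letter list) set" where
  "NB r s m U =
    {(NPre, 0, wpow (vword r s) m), (NSuf, length (W r s U) - length (wpow (vword r s) m), wpow (vword r s) m)} \<union>
    {(NMid, pos r s U j - length (wpow (vword r s) m), wpow (vword r s) m @ emb r s (U ! j) @ wpow (vword r s) m) | j.
       j < length U \<and> U ! j \<noteq> UV}"

definition wordok :: "nat \<Rightarrow> nat \<Rightarrow> nat \<Rightarrow> nat \<Rightarrow> nat \<Rightarrow> usym list \<Rightarrow> bool" where
  "wordok r s S m k U \<longleftrightarrow>
    2 * En S m k k + 3 * pp S + 2 \<le> length U \<and>
    (\<forall>i<S. U ! i = UV) \<and> (\<forall>i<S. U ! (length U - Suc i) = UV) \<and>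
    (\<forall>i i'. i < i' \<longrightarrow> i' < length U \<longrightarrow> U ! i \<noteq> UV \<longrightarrow> U ! i' \<noteq> UV \<longrightarrow> S < i' - i) \<and>
    (\<forall>D j. D \<le> Dn m k \<longrightarrow> D \<le> j \<longrightarrow> j + D < length U \<longrightarrow> (\<exists>\<rho> < pp S. win D U j = perwin S D \<rho>)) \<and>
    (\<forall>D x \<rho>. D \<le> Dn m k \<longrightarrow> \<rho> < pp S \<longrightarrow> D \<le> x \<longrightarrow> x + 3 * pp S + D < length U \<longrightarrow>
        (\<exists>j. x \<le> j \<and> j \<le> x + 3 * pp S \<and> win D U j = perwin S D \<rho>)) \<and>
    nbhds r s S m (W r s U) = NB r s m U"

definition Inv :: "nat \<Rightarrow> nat \<Rightarrow> nat \<Rightarrow> usym list \<Rightarrow> usym list \<Rightarrow> nat \<Rightarrow> nat \<Rightarrow> nat \<Rightarrow> bool" where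
  "Inv S m k U U' n j j' \<longleftrightarrow> win (Dn m n) U j = win (Dn m n) U' j' \<and>
     (j = j' \<or> En S m k n \<le> j \<and> En S m k n \<le> j') \<and>
     (length U - j = length U' - j' \<or> En S m k n \<le> length U - j \<and> En S m k n \<le> length U' - j')"

lemma Inv_sym: "Inv S m k U U' n j j' = Inv S m k U' U n j' j"
  unfolding Inv_def by auto

lemma winU:
  assumes "win D U j = win D U' j'" "\<bar>d\<bar> \<le> int D" "0 \<le> int j + d" "int j + d < int (length U)"
  shows "0 \<le> int j' + d \<and> int j' + d < int (length U') \<and> U ! nat (int j + d) = U' ! nat (int j' + d)"
  using fun_cong[OF assms(1), of d] assms(2-4) by (simp add: win_def split: if_splits)

lemma win0:
  assumes "win D U j = win D U' j'" "j < length U"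
  shows "j' < length U' \<and> U ! j = U' ! j'"
  using winU[OF assms(1), of 0] assms(2) by simp

lemma winsh:
  assumes "win D U j = win D U' j'" "\<bar>d\<bar> + int D' \<le> int D" "0 \<le> int j + d" "int j + d < int (length U)"
  shows "win D' U (nat (int j + d)) = win D' U' (nat (int j' + d))"
proof
  fix l
  have h: "win D U j (d + l) = win D U' j' (d + l)" using assms(1) by simp
  have r: "0 \<le> int j' + d" using winU[OF assms(1), of d] assms(2-4) by simp
  show "win D' U (nat (int j + d)) l = win D' U' (nat (int j' + d)) l"
  proof (cases "\<bar>l\<bar> \<le> int D'")
    case True
    hence "\<bar>d + l\<bar> \<le> int D" using assms(2) by simp
    thus ?thesis using h True assms(3) r by (auto simp: win_def add.assoc split: if_splits)
  next
    case False thus ?thesis by (simp add: win_def)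
  qed
qed

lemma jumped_comm: "jumped w i j = jumped w j i"
  by (simp add: jumped_def min.commute max.commute)

lemma jumped_img: "jumped w (B + t) (B + t1) = (\<lambda>d. w ! (B + d)) ` {d. min t t1 < d \<and> d < max t t1}"
proof -
  have e: "{l. min (B + t) (B + t1) < l \<and> l < max (B + t) (B + t1)} = (\<lambda>d. B + d) ` {d. min t t1 < d \<and> d < max t t1}"
  proof (rule set_eqI, rule iffI)
    fix l assume "l \<in> {l. min (B + t) (B + t1) < l \<and> l < max (B + t) (B + t1)}"
    hence l: "min (B + t) (B + t1) < l" "l < max (B + t) (B + t1)" by auto
    show "l \<in> (\<lambda>d. B + d) ` {d. min t t1 < d \<and> d < max t t1}"
      by (rule image_eqI[of _ _ "l - B"]) (use l in \<open>auto simp: min_def max_def split: if_splits\<close>)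
  qed (auto simp: min_def max_def)
  have "jumped w (B + t) (B + t1) = (\<lambda>l. w ! l) ` {l. min (B + t) (B + t1) < l \<and> l < max (B + t) (B + t1)}"
    unfolding jumped_def by blast
  thus ?thesis unfolding e image_image .
qed

lemma jumped_shift:
  assumes "\<forall>d < M. w ! (B + d) = w' ! (B' + d)" "t < M" "t1 < M"
  shows "jumped w (B + t) (B + t1) = jumped w' (B' + t) (B' + t1)"
  unfolding jumped_img using assms by (intro image_cong) auto


locale gm = rs +
  fixes S m k K :: nat and U U' :: "usym list"
  assumes okU: "wordok r s S m k U" and okU': "wordok r s S m k U'"
    and SD: "2 * Dn m k + 2 \<le> S"
    and K1: "En S m k k + Dn m k + 1 \<le> K" and K2: "K \<le> length U" "K \<le> length U'"
    and pre: "\<forall>i<K. U ! i = U' ! i"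
    and suf: "\<forall>i<K. U ! (length U - Suc i) = U' ! (length U' - Suc i)"
begin

lemma gm_swap: "gm r s S m k K U' U"
  using okU okU' SD K1 K2 pre suf by unfold_locales auto

lemma lenU: "2 * En S m k k + 3 * pp S + 2 \<le> length U" using okU by (simp add: wordok_def)
lemma lenU': "2 * En S m k k + 3 * pp S + 2 \<le> length U'" using okU' by (simp add: wordok_def)

lemma perU': "D \<le> Dn m k \<Longrightarrow> D \<le> j \<Longrightarrow> j + D < length U \<Longrightarrow> \<exists>\<rho> < pp S. win D U j = perwin S D \<rho>"
  using okU by (simp add: wordok_def)
lemma covU': "D \<le> Dn m k \<Longrightarrow> \<rho> < pp S \<Longrightarrow> D \<le> x \<Longrightarrow> x + 3 * pp S + D < length U' \<Longrightarrow>
   \<exists>j. x \<le> j \<and> j \<le> x + 3 * pp S \<and> win D U' j = perwin S D \<rho>"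
  using okU' by (simp add: wordok_def)

lemma E_Suc: "En S m k (Suc n) = En S m k n + (3 * pp S + Dn m k + 4)" by (simp add: En_def)
lemma E_mono: "n \<le> n' \<Longrightarrow> En S m k n \<le> En S m k n'" by (simp add: En_def)
lemma E_ge: "3 * pp S + Dn m k + 4 \<le> En S m k n" by (simp add: En_def)
lemma D_mono: "n \<le> n' \<Longrightarrow> Dn m n \<le> Dn m n'" by (simp add: Dn_def)

lemma win_pre: "j + D < K \<Longrightarrow> win D U j = win D U' j"
proof
  fix l assume a: "j + D < K"
  show "win D U j l = win D U' j l"
  proof (cases "\<bar>l\<bar> \<le> int D \<and> 0 \<le> int j + l")
    case True
    hence "nat (int j + l) < K" using a by linarith
    moreover have "int j + l < int K" using True a by linarith
    ultimately show ?thesis using pre K2 True by (auto simp: win_def)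
  next
    case False thus ?thesis by (auto simp: win_def)
  qed
qed

lemma win_suf:
  assumes c: "1 \<le> c" "c + D \<le> K"
  shows "win D U (length U - c) = win D U' (length U' - c)"
proof
  fix l
  show "win D U (length U - c) l = win D U' (length U' - c) l"
  proof (cases "\<bar>l\<bar> \<le> int D \<and> l < int c")
    case True
    define i where "i = nat (int c - 1 - l)"
    have iK: "i < K" using True c unfolding i_def by linarith
    have e1: "nat (int (length U - c) + l) = length U - Suc i" using True c K2 unfolding i_def by linarith
    have e2: "nat (int (length U' - c) + l) = length U' - Suc i" using True c K2 unfolding i_def by linarith
    have r1: "0 \<le> int (length U - c) + l" "int (length U - c) + l < int (length U)" using True c K2 by linarith+
    have r2: "0 \<le> int (length U' - c) + l" "int (length U' - c) + l < int (length U')" using True c K2 by linarith+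
    show ?thesis using r1 r2 True suf iK unfolding win_def e1 e2 by simp
  next
    case False
    hence "\<not> (\<bar>l\<bar> \<le> int D \<and> 0 \<le> int (length U - c) + l \<and> int (length U - c) + l < int (length U))"
          "\<not> (\<bar>l\<bar> \<le> int D \<and> 0 \<le> int (length U' - c) + l \<and> int (length U' - c) + l < int (length U'))"
      using c K2 by linarith+
    thus ?thesis unfolding win_def by auto
  qed
qed

lemma pre_align:
  assumes "n \<le> k" "j1 < En S m k k"
  shows "j1 < length U' \<and> Inv S m k U U' n j1 j1"
proof -
  have "j1 + Dn m n < K" using assms K1 D_mono[of n k] by linarith
  hence w: "win (Dn m n) U j1 = win (Dn m n) U' j1" by (rule win_pre)
  have "En S m k n \<le> En S m k k" using E_mono assms by simp
  thus ?thesis using w lenU lenU' assms unfolding Inv_def by auto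
qed

lemma suf_align:
  assumes "n \<le> k" "j1 < length U" "length U - j1 < En S m k k"
  shows "length U' - (length U - j1) < length U' \<and> Inv S m k U U' n j1 (length U' - (length U - j1))"
proof -
  define c where "c = length U - j1"
  have c1: "1 \<le> c" "c + Dn m n \<le> K" using assms K1 D_mono[of n k] unfolding c_def by linarith+
  have j1: "j1 = length U - c" using assms unfolding c_def by simp
  have w: "win (Dn m n) U j1 = win (Dn m n) U' (length U' - c)" using win_suf[OF c1] j1 by simp
  have "En S m k n \<le> En S m k k" using E_mono assms by simp
  thus ?thesis using w lenU lenU' assms c1 unfolding Inv_def c_def by auto
qed

lemma int_align:
  assumes "n \<le> k" "En S m k n \<le> j1" "En S m k n \<le> length U - j1" "En S m k n \<le> x"
    "x + 3 * pp S + En S m k n \<le> length U'"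
  shows "\<exists>j2. x \<le> j2 \<and> j2 \<le> x + 3 * pp S \<and> j2 < length U' \<and> Inv S m k U U' n j1 j2"
proof -
  have Dk: "Dn m n \<le> Dn m k" using D_mono assms by simp
  have EE: "Dn m k + 4 \<le> En S m k n" using E_ge[of n] by linarith
  obtain \<rho> where \<rho>: "\<rho> < pp S" "win (Dn m n) U j1 = perwin S (Dn m n) \<rho>"
  proof -
    have "Dn m n \<le> j1" "j1 + Dn m n < length U" using assms(2,3) EE Dk by linarith+
    thus ?thesis using perU'[OF Dk] that by blast
  qed
  obtain j2 where j2: "x \<le> j2" "j2 \<le> x + 3 * pp S" "win (Dn m n) U' j2 = perwin S (Dn m n) \<rho>"
  proof -
    have "Dn m n \<le> x" "x + 3 * pp S + Dn m n < length U'" using assms(4,5) EE Dk by linarith+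
    thus ?thesis using covU'[OF Dk \<rho>(1)] that by blast
  qed
  have "j2 < length U'" using j2 assms E_ge[of n] by linarith
  thus ?thesis using j2 \<rho> assms unfolding Inv_def by (intro exI[of _ j2]) auto
qed

lemma init:
  assumes "n \<le> k" "j1 < length U"
  shows "\<exists>j2 < length U'. Inv S m k U U' n j1 j2"
proof -
  have Ek: "En S m k n \<le> En S m k k" using E_mono assms by simp
  consider "j1 < En S m k n" | "length U - j1 < En S m k n" | "En S m k n \<le> j1" "En S m k n \<le> length U - j1"
    by linarith
  thus ?thesis
  proof cases
    case 1 thus ?thesis using pre_align[OF assms(1)] Ek by (meson less_le_trans)
  next
    case 2 thus ?thesis using suf_align[OF assms] Ek by (meson less_le_trans)
  next
    case 3
    have "En S m k n + 3 * pp S + En S m k n \<le> length U'" using lenU' Ek by linarith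
    thus ?thesis using int_align[OF assms(1) 3 order.refl] by blast
  qed
qed

lemma target:
  assumes inv: "Inv S m k U U' (Suc n) j j'" and nk: "Suc n \<le> k"
    and jl: "j < length U" "j' < length U'" and j1: "j1 < length U"
  shows "\<exists>j2 < length U'. Inv S m k U U' n j1 j2 \<and>
     (j1 \<le> j + 2 \<and> j \<le> j1 + 2 \<longrightarrow> int j2 - int j' = int j1 - int j) \<and>
     (j + 3 \<le> j1 \<longrightarrow> j' + 3 \<le> j2) \<and> (j1 + 3 \<le> j \<longrightarrow> j2 + 3 \<le> j')"
proof -
  define c where "c = 3 * pp S + Dn m k + 4"
  define E0 where "E0 = En S m k n"
  have E1: "En S m k (Suc n) = E0 + c" unfolding E0_def c_def by (rule E_Suc)
  have D1: "Dn m (Suc n) = Dn m n + 2" by (simp add: Dn_def)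
  have Dk: "Dn m n + 2 \<le> Dn m k" using nk by (simp add: Dn_def)
  have E0c: "c \<le> E0" unfolding E0_def c_def by (rule E_ge)
  have c4: "4 \<le> c" unfolding c_def by simp
  have Ek: "E0 + c \<le> En S m k k" using E_mono[OF nk] E1 by simp
  have L: "2 * (E0 + c) + 3 * pp S + 2 \<le> length U" "2 * (E0 + c) + 3 * pp S + 2 \<le> length U'"
    using lenU lenU' Ek by auto
  have nk': "n \<le> k" using nk by simp
  have w: "win (Dn m (Suc n)) U j = win (Dn m (Suc n)) U' j'"
    and b: "j = j' \<or> E0 + c \<le> j \<and> E0 + c \<le> j'"
    and cc: "length U - j = length U' - j' \<or> E0 + c \<le> length U - j \<and> E0 + c \<le> length U' - j'"
    using inv unfolding Inv_def E1 by auto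
  consider (short) "j1 \<le> j + 2 \<and> j \<le> j1 + 2" | (right) "j + 3 \<le> j1" | (left) "j1 + 3 \<le> j" by linarith
  thus ?thesis
  proof cases
    case short
    define d where "d = int j1 - int j"
    have d: "\<bar>d\<bar> + int (Dn m n) \<le> int (Dn m (Suc n))" using short D1 unfolding d_def by linarith
    have d0: "\<bar>d\<bar> \<le> int (Dn m (Suc n))" using d by linarith
    have rj: "0 \<le> int j + d" "int j + d < int (length U)" using j1 unfolding d_def by linarith+
    have r2: "0 \<le> int j' + d" "int j' + d < int (length U')" using winU[OF w d0 rj] by auto
    define j2 where "j2 = nat (int j' + d)"
    have ww: "win (Dn m n) U j1 = win (Dn m n) U' j2"
      using winsh[OF w d rj] unfolding j2_def d_def by simp
    have j2l: "j2 < length U'" using r2 unfolding j2_def by linarith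
    have j2i: "int j2 = int j' + int j1 - int j" using r2 unfolding j2_def d_def by simp
    have bb: "j1 = j2 \<or> E0 \<le> j1 \<and> E0 \<le> j2"
    proof (cases "j = j'")
      case True thus ?thesis using j2i by simp
    next
      case False thus ?thesis using b short j2i E0c c4 by (intro disjI2 conjI; linarith)
    qed
    have ccc: "length U - j1 = length U' - j2 \<or> E0 \<le> length U - j1 \<and> E0 \<le> length U' - j2"
    proof (cases "length U - j = length U' - j'")
      case True thus ?thesis using j2i jl j1 j2l by (intro disjI1; linarith)
    next
      case False thus ?thesis using cc short j2i E0c c4 jl j1 j2l by (intro disjI2 conjI; linarith)
    qed
    show ?thesis using ww bb ccc j2l short r2 unfolding Inv_def E0_def[symmetric] j2_def d_def
      by (intro exI[of _ "nat (int j' + (int j1 - int j))"]) auto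
  next
    case right
    consider (a) "length U - j < E0 + c" | (be) "E0 + c \<le> length U - j" "length U - j1 < E0"
      | (g1) "E0 + c \<le> length U - j" "E0 \<le> length U - j1" "j1 < E0"
      | (g2) "E0 + c \<le> length U - j" "E0 \<le> length U - j1" "E0 \<le> j1" by linarith
    thus ?thesis
    proof cases
      case a
      have eq: "length U - j = length U' - j'" using cc a by linarith
      have "length U - j1 < En S m k k" using a Ek right by linarith
      from suf_align[OF nk' j1 this] show ?thesis using eq right jl j1
        by (intro exI[of _ "length U' - (length U - j1)"]) auto
    next
      case be
      have "E0 + c \<le> length U' - j'" using cc be by linarith
      moreover have "length U - j1 < En S m k k" using be Ek by linarith
      moreover note suf_align[OF nk' j1 this]
      ultimately show ?thesis using right jl j1 be E0c c4
        by (intro exI[of _ "length U' - (length U - j1)"]) auto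
    next
      case g1
      have "j = j'" using b g1 right by linarith
      moreover have "j1 < En S m k k" using g1 Ek by linarith
      moreover note pre_align[OF nk' this]
      ultimately show ?thesis using right by (intro exI[of _ j1]) auto
    next
      case g2
      have L2: "E0 + c \<le> length U' - j'" using cc g2 by linarith
      define x where "x = max (j' + 3) E0"
      have x: "E0 \<le> x" "x + 3 * pp S + E0 \<le> length U'" using L2 L(2) unfolding x_def c_def by auto
      obtain j2 where "x \<le> j2" "j2 \<le> x + 3 * pp S" "j2 < length U'" "Inv S m k U U' n j1 j2"
        using int_align[OF nk' g2(3)[unfolded E0_def] g2(2)[unfolded E0_def] x[unfolded E0_def]] by blast
      thus ?thesis using right unfolding x_def by (intro exI[of _ j2]) auto
    qed
  next
    case left
    consider (a) "j < E0 + c" | (be) "E0 + c \<le> j" "j1 < E0"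
      | (g1) "E0 + c \<le> j" "E0 \<le> j1" "length U - j1 < E0"
      | (g2) "E0 + c \<le> j" "E0 \<le> j1" "E0 \<le> length U - j1" by linarith
    thus ?thesis
    proof cases
      case a
      have "j = j'" using b a by linarith
      moreover have "j1 < En S m k k" using a Ek left by linarith
      moreover note pre_align[OF nk' this]
      ultimately show ?thesis using left by (intro exI[of _ j1]) auto
    next
      case be
      have "E0 + c \<le> j'" using b be by linarith
      moreover have "j1 < En S m k k" using be Ek by linarith
      moreover note pre_align[OF nk' this]
      ultimately show ?thesis using left E0c be c4 by (intro exI[of _ j1]) auto
    next
      case g1
      have eq: "length U - j = length U' - j'" using cc g1 left jl by linarith
      have "length U - j1 < En S m k k" using g1 Ek by linarith
      from suf_align[OF nk' j1 this] show ?thesis using eq left jl j1 g1 L(2)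
        by (intro exI[of _ "length U' - (length U - j1)"]) auto
    next
      case g2
      have L2: "E0 + c \<le> j'" using b g2 by linarith
      define x where "x = min (j' - 3) (length U' - E0) - 3 * pp S"
      have x: "E0 \<le> x" "x + 3 * pp S + E0 \<le> length U'" using L2 L(2) unfolding x_def c_def by auto
      obtain j2 where "x \<le> j2" "j2 \<le> x + 3 * pp S" "j2 < length U'" "Inv S m k U U' n j1 j2"
        using int_align[OF nk' g2(2)[unfolded E0_def] g2(3)[unfolded E0_def] x[unfolded E0_def]] by blast
      moreover have "x + 3 * pp S \<le> j' - 3" using L2 L(2) unfolding x_def c_def by auto
      ultimately show ?thesis using left L2 E0c unfolding c_def by (intro exI[of _ j2]) auto
    qed
  qed
qed

end

definition Good :: "nat \<Rightarrow> nat \<Rightarrow> nat \<Rightarrow> nat \<Rightarrow> nat \<Rightarrow> usym list \<Rightarrow> usym list \<Rightarrow> nat \<Rightarrow> nat \<Rightarrow> nat \<Rightarrow> bool" where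
  "Good r s S m k U U' n q q' \<longleftrightarrow> (\<exists>j j' o'. j < length U \<and> j' < length U' \<and> o' < length (emb r s (U ! j)) \<and>
     q = pos r s U j + o' \<and> q' = pos r s U' j' + o' \<and> Inv S m k U U' n j j')"

lemma winN:
  assumes "win D U j = win D U' j'" "i < length U" "i \<le> j + D" "j \<le> i + D"
  shows "j \<le> j' + i \<and> j' + i - j < length U' \<and> U ! i = U' ! (j' + i - j)"
proof -
  have "\<bar>int i - int j\<bar> \<le> int D" "0 \<le> int j + (int i - int j)" "int j + (int i - int j) < int (length U)"
    using assms by linarith+
  from winU[OF assms(1) this] have h: "0 \<le> int j' + (int i - int j)" "int j' + (int i - int j) < int (length U')"
    "U ! nat (int j + (int i - int j)) = U' ! nat (int j' + (int i - int j))" by auto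
  have a: "j \<le> j' + i" using h(1) by linarith
  hence "int j' + (int i - int j) = int (j' + i - j)" by simp
  hence "nat (int j' + (int i - int j)) = j' + i - j" by simp
  thus ?thesis using h a by simp
qed

context rs
begin

lemma len_wpow: "length (wpow (vword r s) m) = m * length (vword r s)"
  by (induction m) (auto simp: wpow_def)

lemma posV:
  assumes "x + c \<le> length U" "\<forall>t<c. U ! (x + t) = UV"
  shows "pos r s U (x + c) = pos r s U x + c * length (vword r s)"
proof -
  have "take c (drop x U) = replicate c UV"
    using assms by (intro nth_equalityI) auto
  thus ?thesis by (simp add: pos_add W_replicate len_wpow)
qed

lemma wo_first: "wordok r s S m k U \<Longrightarrow> i < S \<Longrightarrow> U ! i = UV" by (simp add: wordok_def)
lemma wo_last: "wordok r s S m k U \<Longrightarrow> i < S \<Longrightarrow> U ! (length U - Suc i) = UV" by (simp add: wordok_def)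
lemma wo_iso: "wordok r s S m k U \<Longrightarrow> i < i' \<Longrightarrow> i' < length U \<Longrightarrow> U ! i \<noteq> UV \<Longrightarrow> U ! i' \<noteq> UV \<Longrightarrow> S < i' - i"
  by (simp add: wordok_def)
lemma wo_nb: "wordok r s S m k U \<Longrightarrow> nbhds r s S m (W r s U) = NB r s m U" by (simp add: wordok_def)
lemma wo_len: "wordok r s S m k U \<Longrightarrow> 2 * En S m k k + 3 * pp S + 2 \<le> length U" by (simp add: wordok_def)

lemma wo_lenS: "wordok r s S m k U \<Longrightarrow> 2 * S \<le> length U"
  using wo_len[of S m k U] by (simp add: En_def pp_def)

lemma pos_first:
  assumes "wordok r s S m k U" "j \<le> S"
  shows "pos r s U j = j * length (vword r s)"
  using posV[of 0 j U] assms wo_first[OF assms(1)] wo_lenS[OF assms(1)] by (simp add: pos_def)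

lemma pos_last:
  assumes "wordok r s S m k U" "c \<le> S"
  shows "length (W r s U) = pos r s U (length U - c) + c * length (vword r s)"
proof -
  have L: "2 * S \<le> length U" using wo_lenS[OF assms(1)] .
  have "\<forall>t<c. U ! (length U - c + t) = UV"
  proof (intro allI impI)
    fix t assume "t < c"
    hence "length U - c + t = length U - Suc (c - 1 - t)" "c - 1 - t < S" using assms L by auto
    thus "U ! (length U - c + t) = UV" using wo_last[OF assms(1)] by simp
  qed
  hence "pos r s U (length U - c + c) = pos r s U (length U - c) + c * length (vword r s)"
    using posV[of "length U - c" c U] assms L by simp
  thus ?thesis using assms L by (simp add: len_W)
qed

lemma adjV:
  assumes "wordok r s S m k U" "1 \<le> S" "Suc i < length U"
  shows "U ! i = UV \<or> U ! Suc i = UV"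
proof (rule ccontr)
  assume "\<not> (U ! i = UV \<or> U ! Suc i = UV)"
  hence "S < Suc i - i" using wo_iso[OF assms(1), of i "Suc i"] assms by simp
  thus False using assms(2) by simp
qed

lemma notin:
  assumes ok: "wordok r s S m k U" and mS: "m \<le> S"
    and j: "m \<le> j" "j + m < length U" and nf: "\<forall>i<length U. i \<le> j + m \<longrightarrow> j \<le> i + m \<longrightarrow> U ! i = UV"
    and o: "o' < length (emb r s (U ! j))"
  shows "\<forall>kk p u. (kk, p, u) \<in> nbhds r s S m (W r s U) \<longrightarrow> \<not> in_nb (pos r s U j + o') (p, u)"
proof (intro allI impI)
  fix kk p u assume "(kk, p, u) \<in> nbhds r s S m (W r s U)"
  hence mem: "(kk, p, u) \<in> NB r s m U" using wo_nb[OF ok] by simp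
  let ?V = "length (vword r s)"
  let ?q = "pos r s U j + o'"
  have jl: "j < length U" using j by simp
  have q1: "?q < pos r s U (Suc j)" using pos_Suc[OF jl] o by simp
  have pm: "pos r s U m = m * ?V" using pos_first[OF ok mS] .
  have qlo: "m * ?V \<le> ?q" using pos_mono[of m j U] j pm by simp
  have lw: "length (W r s U) = pos r s U (length U - m) + m * ?V" using pos_last[OF ok mS] .
  have "Suc j \<le> length U - m" using j by linarith
  hence qhi: "?q < pos r s U (length U - m)" using q1 pos_mono[of "Suc j" "length U - m" U] by simp
  have "(kk = NPre \<and> p = 0 \<and> u = wpow (vword r s) m) \<or>
     (kk = NSuf \<and> p = length (W r s U) - m * ?V \<and> u = wpow (vword r s) m) \<or>
     (\<exists>jf. kk = NMid \<and> jf < length U \<and> U ! jf \<noteq> UV \<and> p = pos r s U jf - m * ?V \<and>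
        u = wpow (vword r s) m @ emb r s (U ! jf) @ wpow (vword r s) m)"
    using mem unfolding NB_def len_wpow by auto
  then consider "kk = NPre" "p = 0" "u = wpow (vword r s) m"
    | "kk = NSuf" "p = length (W r s U) - m * ?V" "u = wpow (vword r s) m"
    | jf where "kk = NMid" "jf < length U" "U ! jf \<noteq> UV" "p = pos r s U jf - m * ?V"
        "u = wpow (vword r s) m @ emb r s (U ! jf) @ wpow (vword r s) m"
    by blast
  thus "\<not> in_nb ?q (p, u)"
  proof cases
    case 1 thus ?thesis using qlo by (simp add: in_nb_def len_wpow)
  next
    case 2 thus ?thesis using qhi lw by (simp add: in_nb_def)
  next
    case 3
    have far: "j + m < jf \<or> jf + m < j" using nf 3 by (meson not_le)
    thus ?thesis
    proof
      assume a: "j + m < jf"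
      have "\<forall>t<m. U ! (Suc j + t) = UV" using nf a 3 by auto
      hence "pos r s U (Suc j + m) = pos r s U (Suc j) + m * ?V" using posV[of "Suc j" m U] a 3 by simp
      moreover have "pos r s U (Suc j + m) \<le> pos r s U jf" using pos_mono a by simp
      ultimately have "?q < p" using q1 3 by simp
      thus ?thesis by (simp add: in_nb_def)
    next
      assume a: "jf + m < j"
      have "S \<le> jf" using wo_first[OF ok, of jf] 3 by (meson not_le)
      hence pf: "m * ?V \<le> pos r s U jf" using pos_mono[of m jf U] pm mS by simp
      have "\<forall>t<m. U ! (j - m + t) = UV" using nf a j by auto
      hence "pos r s U (j - m + m) = pos r s U (j - m) + m * ?V" using posV[of "j - m" m U] a j by simp
      hence pj: "pos r s U j = pos r s U (j - m) + m * ?V" using j by simp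
      have "pos r s U (Suc jf) \<le> pos r s U (j - m)" using pos_mono a by simp
      hence "p + length u \<le> ?q" using pos_Suc[of jf U] 3 pf pj by (simp add: len_wpow)
      thus ?thesis by (simp add: in_nb_def)
    qed
  qed
qed

end


context gm
begin

lemma take_pre: "j \<le> K \<Longrightarrow> take j U = take j U'"
  using pre K2 by (intro nth_equalityI) auto

lemma eq0_main:
  assumes inv: "Inv S m k U U' n j1 j2" and nk: "n \<le> k" and jl: "j1 < length U" "j2 < length U'"
    and o: "o' < length (emb r s (U ! j1))"
  shows "eq0 r s S m (W r s U) (pos r s U j1 + o') (W r s U') (pos r s U' j2 + o')"
proof -
  let ?V = "length (vword r s)"
  let ?vm = "wpow (vword r s) m"
  let ?q1 = "pos r s U j1 + o'" and ?q2 = "pos r s U' j2 + o'"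
  define D where "D = Dn m n"
  define E where "E = En S m k n"
  have w: "win D U j1 = win D U' j2" and b: "j1 = j2 \<or> E \<le> j1 \<and> E \<le> j2"
    and cc: "length U - j1 = length U' - j2 \<or> E \<le> length U - j1 \<and> E \<le> length U' - j2"
    using inv unfolding Inv_def D_def E_def by auto
  have D2m: "2 * m \<le> D" unfolding D_def Dn_def by simp
  have ED: "D + 4 \<le> E" using E_ge[of n] D_mono[OF nk] unfolding D_def E_def by linarith
  have mS: "m \<le> S" "2 * m \<le> S" "1 \<le> S" using SD by (auto simp: Dn_def)
  have sym12: "U ! j1 = U' ! j2" using win0[OF w jl(1)] by simp
  have o2: "o' < length (emb r s (U' ! j2))" using o sym12 by simp
  have let1: "W r s U ! ?q1 = W r s U' ! ?q2" using W_nth[OF jl(1) o] W_nth[OF jl(2) o2] sym12 by simp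
  have nb1: "nbhds r s S m (W r s U) = NB r s m U" using wo_nb[OF okU] .
  have nb2: "nbhds r s S m (W r s U') = NB r s m U'" using wo_nb[OF okU'] .
  have q1s: "?q1 < pos r s U (Suc j1)" using pos_Suc[OF jl(1)] o by simp
  have q2s: "?q2 < pos r s U' (Suc j2)" using pos_Suc[OF jl(2)] o2 by simp
  consider (Pre) "j1 < m" | (Suf) "m \<le> j1" "length U \<le> j1 + m"
    | (Mid) "m \<le> j1" "j1 + m < length U" "\<exists>jf < length U. U ! jf \<noteq> UV \<and> jf \<le> j1 + m \<and> j1 \<le> jf + m"
    | (None) "m \<le> j1" "j1 + m < length U" "\<forall>i<length U. i \<le> j1 + m \<longrightarrow> j1 \<le> i + m \<longrightarrow> U ! i = UV"
  proof -
    assume h1: "j1 < m \<Longrightarrow> thesis" and h2: "m \<le> j1 \<Longrightarrow> length U \<le> j1 + m \<Longrightarrow> thesis"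
      and h3: "m \<le> j1 \<Longrightarrow> j1 + m < length U \<Longrightarrow> \<exists>jf < length U. U ! jf \<noteq> UV \<and> jf \<le> j1 + m \<and> j1 \<le> jf + m \<Longrightarrow> thesis"
      and h4: "m \<le> j1 \<Longrightarrow> j1 + m < length U \<Longrightarrow> \<forall>i<length U. i \<le> j1 + m \<longrightarrow> j1 \<le> i + m \<longrightarrow> U ! i = UV \<Longrightarrow> thesis"
    show thesis
    proof (cases "j1 < m")
      case True thus ?thesis using h1 by simp
    next
      case F1: False
      show ?thesis
      proof (cases "length U \<le> j1 + m")
        case True thus ?thesis using h2 F1 by simp
      next
        case F2: False
        show ?thesis
        proof (cases "\<exists>jf < length U. U ! jf \<noteq> UV \<and> jf \<le> j1 + m \<and> j1 \<le> jf + m")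
          case True thus ?thesis using h3 F1 F2 by simp
        next
          case False
          hence "\<forall>i<length U. i \<le> j1 + m \<longrightarrow> j1 \<le> i + m \<longrightarrow> U ! i = UV" by blast
          thus ?thesis using h4 F1 F2 by simp
        qed
      qed
    qed
  qed
  thus ?thesis
  proof cases
    case Pre
    have j12: "j1 = j2" using b Pre ED D2m by auto
    have "m \<le> En S m k k" using E_ge[of k] by (simp add: Dn_def)
    hence "j1 \<le> K" using K1 Pre by linarith
    hence pe: "pos r s U j1 = pos r s U' j1" using take_pre by (simp add: pos_def)
    have "pos r s U (Suc j1) \<le> pos r s U m" using pos_mono Pre by simp
    hence "?q1 < m * ?V" using q1s pos_first[OF okU mS(1)] by simp
    moreover have "(NPre, 0, ?vm) \<in> nbhds r s S m (W r s U)" "(NPre, 0, ?vm) \<in> nbhds r s S m (W r s U')"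
      using nb1 nb2 by (auto simp: NB_def)
    ultimately show ?thesis unfolding eq0_def using let1 j12 pe
      by (intro conjI disjI1 exI[of _ NPre] exI[of _ 0] exI[of _ 0] exI[of _ ?vm]) (auto simp: in_nb_def len_wpow)
  next
    case Suf
    have "length U - j1 < E" using Suf ED D2m by linarith
    hence ceq: "length U - j1 = length U' - j2" using cc by auto
    define c where "c = length U - j1"
    have c: "c \<le> m" "c \<le> S" "1 \<le> c" using Suf jl mS unfolding c_def by auto
    have l1: "length (W r s U) = pos r s U j1 + c * ?V" using pos_last[OF okU c(2)] jl unfolding c_def by simp
    have l2: "length (W r s U') = pos r s U' j2 + c * ?V" using pos_last[OF okU' c(2)] jl ceq unfolding c_def by simp
    have m1: "(NSuf, length (W r s U) - m * ?V, ?vm) \<in> nbhds r s S m (W r s U)" using nb1 by (simp add: NB_def len_wpow)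
    have m2: "(NSuf, length (W r s U') - m * ?V, ?vm) \<in> nbhds r s S m (W r s U')" using nb2 by (simp add: NB_def len_wpow)
    have o1: "o' < c * ?V" using q1s pos_Suc[OF jl(1)] l1 pos_mono[of "Suc j1" "length U" U] jl len_W[of U] by simp
    have cm: "c * ?V \<le> m * ?V" using c by simp
    have mw1: "m * ?V \<le> length (W r s U)" using pos_last[OF okU mS(1)] by simp
    have mw2: "m * ?V \<le> length (W r s U')" using pos_last[OF okU' mS(1)] by simp
    have i1: "in_nb ?q1 (length (W r s U) - m * ?V, ?vm)" unfolding in_nb_def prod.sel len_wpow
      using l1 cm o1 mw1 by (intro conjI; linarith)
    have i2: "in_nb ?q2 (length (W r s U') - m * ?V, ?vm)" unfolding in_nb_def prod.sel len_wpow
      using l2 cm o1 mw2 by (intro conjI; linarith)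
    have off: "?q1 - (length (W r s U) - m * ?V) = ?q2 - (length (W r s U') - m * ?V)"
      using l1 l2 cm mw1 mw2 by linarith
    show ?thesis unfolding eq0_def using let1 m1 m2 i1 i2 off by (intro conjI disjI1 exI) auto
  next
    case Mid
    obtain jf where jf: "jf < length U" "U ! jf \<noteq> UV" "jf \<le> j1 + m" "j1 \<le> jf + m" using Mid by blast
    define jf' where "jf' = j2 + jf - j1"
    have wf: "j1 \<le> j2 + jf" "jf' < length U'" "U ! jf = U' ! jf'"
      using winN[OF w jf(1)] jf D2m unfolding jf'_def by auto
    have Sjf: "S \<le> jf" using wo_first[OF okU, of jf] jf(2) by (cases "jf < S") auto
    have Sjf': "S \<le> jf'" using wo_first[OF okU', of jf'] jf(2) wf(3) by (cases "jf' < S") auto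
    have jfS: "jf + S < length U"
    proof (rule ccontr)
      assume "\<not> jf + S < length U"
      hence "length U - Suc (length U - 1 - jf) = jf" "length U - 1 - jf < S" using jf by auto
      thus False using wo_last[OF okU, of "length U - 1 - jf"] jf by simp
    qed
    define x1 where "x1 = jf - m"
    define x2 where "x2 = jf' - m"
    have un: "\<forall>t < 2 * m + 1. U ! (x1 + t) = U' ! (x2 + t)"
    proof (intro allI impI)
      fix t assume t: "t < 2 * m + 1"
      have "x1 + t < length U" "x1 + t \<le> j1 + D" "j1 \<le> x1 + t + D" using t jf jfS mS Sjf D2m unfolding x1_def by linarith+
      from winN[OF w this] have "U ! (x1 + t) = U' ! (j2 + (x1 + t) - j1)" by simp
      moreover have "j2 + (x1 + t) - j1 = x2 + t" using wf Sjf Sjf' mS jf unfolding x1_def x2_def jf'_def by linarith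
      ultimately show "U ! (x1 + t) = U' ! (x2 + t)" by simp
    qed
    have lx1: "x1 + (2 * m + 1) \<le> length U" using jfS mS Sjf unfolding x1_def by linarith
    have lx2: "x2 + (2 * m + 1) \<le> length U'"
    proof -
      have "U' ! (x2 + m) \<noteq> UV" using un[rule_format, of m] jf wf Sjf Sjf' mS unfolding x1_def x2_def by simp
      have "jf' + S < length U'"
      proof (rule ccontr)
        assume "\<not> jf' + S < length U'"
        hence "length U' - Suc (length U' - 1 - jf') = jf'" "length U' - 1 - jf' < S" using wf by auto
        thus False using wo_last[OF okU', of "length U' - 1 - jf'"] wf jf by simp
      qed
      thus ?thesis using mS Sjf' unfolding x2_def by linarith
    qed
    have tk: "take (2 * m + 1) (drop x1 U) = take (2 * m + 1) (drop x2 U')"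
      using un lx1 lx2 by (intro nth_equalityI) auto
    note sh = shift(1)[OF tk lx1 lx2]
    have vL: "\<forall>t<m. U ! (x1 + t) = UV"
    proof (intro allI impI)
      fix t assume t: "t < m"
      show "U ! (x1 + t) = UV"
      proof (rule ccontr)
        assume "U ! (x1 + t) \<noteq> UV"
        hence "S < jf - (x1 + t)" using wo_iso[OF okU, of "x1 + t" jf] jf t Sjf mS unfolding x1_def by simp
        thus False using t mS Sjf unfolding x1_def by linarith
      qed
    qed
    have vR: "\<forall>t<m. U ! (Suc jf + t) = UV"
    proof (intro allI impI)
      fix t assume t: "t < m"
      show "U ! (Suc jf + t) = UV"
      proof (rule ccontr)
        assume "U ! (Suc jf + t) \<noteq> UV"
        hence "S < Suc jf + t - jf" using wo_iso[OF okU, of jf "Suc jf + t"] jf t jfS mS by simp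
        thus False using t mS by linarith
      qed
    qed
    have pf: "pos r s U jf = pos r s U x1 + m * ?V" using posV[of x1 m U] vL lx1 Sjf mS unfolding x1_def by simp
    have pR: "pos r s U (Suc jf + m) = pos r s U (Suc jf) + m * ?V" using posV[of "Suc jf" m U] vR lx1 Sjf mS jfS unfolding x1_def by simp
    have e1: "x1 + m = jf" "x2 + m = jf'" "x1 + (2 * m + 1) = Suc jf + m" "x2 + (2 * m + 1) = Suc jf' + m"
      using Sjf Sjf' mS unfolding x1_def x2_def by linarith+
    have s1: "pos r s U' jf' - pos r s U' x2 = m * ?V" using sh[rule_format, of m, unfolded e1(1) e1(2)] pf by simp
    have s2: "pos r s U' (Suc jf' + m) - pos r s U' x2 = pos r s U (Suc jf + m) - pos r s U x1"
      using sh[rule_format, of "2 * m + 1", OF order.refl, unfolded e1(3) e1(4)] by simp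
    have mx2: "pos r s U' x2 \<le> pos r s U' jf'" "pos r s U' x2 \<le> pos r s U' (Suc jf' + m)"
      using pos_mono[of x2 jf' U'] pos_mono[of x2 "Suc jf' + m" U'] e1 by simp_all
    have p2: "pos r s U' jf' - m * ?V = pos r s U' x2" using s1 mx2 by linarith
    have p1: "pos r s U jf - m * ?V = pos r s U x1" using pf by simp
    define a where "a = j1 - x1"
    have a: "a \<le> 2 * m + 1" "j1 = x1 + a" "j2 = x2 + a" using jf wf Sjf Sjf' mS unfolding a_def x1_def x2_def jf'_def by linarith+
    have sa: "pos r s U j1 - pos r s U x1 = pos r s U' j2 - pos r s U' x2" using sh[rule_format, of a] a by simp
    let ?u = "?vm @ emb r s (U ! jf) @ ?vm"
    have m1: "(NMid, pos r s U x1, ?u) \<in> nbhds r s S m (W r s U)"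
      unfolding nb1 NB_def len_wpow
      by (rule UnI2, rule CollectI, rule exI[of _ jf]) (use p1 jf in simp)
    have m2: "(NMid, pos r s U' x2, ?u) \<in> nbhds r s S m (W r s U')"
      unfolding nb2 NB_def len_wpow
      by (rule UnI2, rule CollectI, rule exI[of _ jf']) (use p2 jf wf in simp)
    have lu: "length ?u = pos r s U (Suc jf + m) - pos r s U x1"
      using pR pf pos_Suc[OF jf(1)] by (simp add: len_wpow)
    have h1: "pos r s U x1 \<le> pos r s U j1" "pos r s U (Suc j1) \<le> pos r s U (Suc jf + m)"
      using pos_mono a jf by auto
    have h2: "pos r s U' x2 \<le> pos r s U' j2" "pos r s U' (Suc j2) \<le> pos r s U' (Suc jf' + m)"
      using pos_mono a jf wf unfolding jf'_def by auto
    have i1: "in_nb ?q1 (pos r s U x1, ?u)" using h1 q1s lu by (simp add: in_nb_def)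
    have i2: "in_nb ?q2 (pos r s U' x2, ?u)" using h2 q2s lu s2 mx2 by (simp add: in_nb_def)
    have off: "?q1 - pos r s U x1 = ?q2 - pos r s U' x2" using sa h1 h2 by simp
    show ?thesis unfolding eq0_def using let1 m1 m2 i1 i2 off by (intro conjI disjI1 exI) auto
  next
    case None
    have j2m: "m \<le> j2" using b None ED D2m by auto
    have j2L: "j2 + m < length U'" using cc None ED jl D2m by auto
    have nf2: "\<forall>i<length U'. i \<le> j2 + m \<longrightarrow> j2 \<le> i + m \<longrightarrow> U' ! i = UV"
    proof (intro allI impI)
      fix i assume i: "i < length U'" "i \<le> j2 + m" "j2 \<le> i + m"
      have "i \<le> j2 + D" "j2 \<le> i + D" using i D2m by linarith+
      from winN[OF w[symmetric] i(1) this]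
      have "j2 \<le> j1 + i" "j1 + i - j2 < length U" "U' ! i = U ! (j1 + i - j2)" by auto
      moreover have "j1 + i - j2 \<le> j1 + m" "j1 \<le> j1 + i - j2 + m" using i by linarith+
      ultimately show "U' ! i = UV" using None(3) by auto
    qed
    have n1: "\<forall>kk p u. (kk, p, u) \<in> nbhds r s S m (W r s U) \<longrightarrow> \<not> in_nb ?q1 (p, u)"
      using notin[OF okU mS(1) None(1,2) None(3) o] .
    have n2: "\<forall>kk p u. (kk, p, u) \<in> nbhds r s S m (W r s U') \<longrightarrow> \<not> in_nb ?q2 (p, u)"
      using notin[OF okU' mS(1) j2m j2L nf2 o2] .
    show ?thesis unfolding eq0_def using let1 n1 n2 by (intro conjI disjI2) auto
  qed
qed

end

lemma eq0_sym_imp: "eq0 r s R m w1 i1 w2 i2 \<Longrightarrow> eq0 r s R m w2 i2 w1 i1"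
proof -
  assume h: "eq0 r s R m w1 i1 w2 i2"
  hence l: "w2 ! i2 = w1 ! i1" unfolding eq0_def by simp
  from h consider (a) k p1 p2 u where "(k, p1, u) \<in> nbhds r s R m w1" "(k, p2, u) \<in> nbhds r s R m w2"
     "in_nb i1 (p1, u)" "in_nb i2 (p2, u)" "i1 - p1 = i2 - p2"
   | (b) "\<forall>k p u. (k, p, u) \<in> nbhds r s R m w1 \<longrightarrow> \<not> in_nb i1 (p, u)"
       "\<forall>k p u. (k, p, u) \<in> nbhds r s R m w2 \<longrightarrow> \<not> in_nb i2 (p, u)"
    unfolding eq0_def by blast
  thus ?thesis
  proof cases
    case a thus ?thesis unfolding eq0_def using l by (intro conjI disjI1 exI[of _ k] exI[of _ p2] exI[of _ p1] exI[of _ u]) auto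
  next
    case b thus ?thesis unfolding eq0_def using l by (intro conjI disjI2) auto
  qed
qed

lemma eq0_sym: "eq0 r s R m w1 i1 w2 i2 = eq0 r s R m w2 i2 w1 i1"
  using eq0_sym_imp by blast

lemma wins_sym: "wins r s R m n w1 i1 w2 i2 = wins r s R m n w2 i2 w1 i1"
proof (induction n arbitrary: i1 i2)
  case 0 thus ?case by simp
next
  case (Suc n)
  have e: "\<And>a b. eq0 r s R m w2 a w1 b = eq0 r s R m w1 b w2 a" by (rule eq0_sym)
  have w: "\<And>a b. wins r s R m n w2 a w1 b = wins r s R m n w1 b w2 a" using Suc.IH by simp
  show ?case unfolding wins.simps e w by blast
qed

context rs
begin
lemma findV:
  assumes "wordok r s S m k U" "1 \<le> S" "a + 3 \<le> b" "b < length U"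
  shows "\<exists>l. a < l \<and> l < b \<and> U ! l = UV"
proof -
  have A: "Suc (Suc a) < length U" using assms by linarith
  from adjV[OF assms(1,2) A] show ?thesis
  proof
    assume "U ! Suc a = UV" thus ?thesis using assms by (intro exI[of _ "Suc a"]) auto
  next
    assume "U ! Suc (Suc a) = UV" thus ?thesis using assms by (intro exI[of _ "Suc (Suc a)"]) auto
  qed
qed
end

context gm
begin

lemma Good_sym: "Good r s S m k U U' n q q' = Good r s S m k U' U n q' q"
proof
  assume "Good r s S m k U U' n q q'"
  then obtain j j' o' where h: "j < length U" "j' < length U'" "o' < length (emb r s (U ! j))"
     "q = pos r s U j + o'" "q' = pos r s U' j' + o'" "Inv S m k U U' n j j'" unfolding Good_def by blast
  have "U ! j = U' ! j'" using win0[of "Dn m n" U j U' j'] h unfolding Inv_def by auto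
  thus "Good r s S m k U' U n q' q" unfolding Good_def using h Inv_sym by (intro exI[of _ j'] exI[of _ j] exI[of _ o']) auto
next
  assume "Good r s S m k U' U n q' q"
  then obtain j j' o' where h: "j' < length U'" "j < length U" "o' < length (emb r s (U' ! j'))"
     "q' = pos r s U' j' + o'" "q = pos r s U j + o'" "Inv S m k U' U n j' j" unfolding Good_def by blast
  have "U' ! j' = U ! j" using win0[of "Dn m n" U' j' U j] h unfolding Inv_def by auto
  thus "Good r s S m k U U' n q q'" unfolding Good_def using h Inv_sym by (intro exI[of _ j] exI[of _ j'] exI[of _ o']) auto
qed

lemma HS:
  assumes G: "Good r s S m k U U' (Suc n) q q'" and nk: "Suc n \<le> k"
    and q1: "q1 < length (W r s U)" "q1 \<noteq> q"
  shows "\<exists>q2. answers (W r s U) q q1 (W r s U') q' q2 \<and> eq0 r s S m (W r s U) q1 (W r s U') q2 \<and>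
     Good r s S m k U U' n q1 q2"
proof -
  obtain j j' o' where jj: "j < length U" "j' < length U'" "o' < length (emb r s (U ! j))"
     "q = pos r s U j + o'" "q' = pos r s U' j' + o'" and inv: "Inv S m k U U' (Suc n) j j'"
    using G unfolding Good_def by blast
  obtain j1 o1 where jj1: "j1 < length U" "o1 < length (emb r s (U ! j1))" "q1 = pos r s U j1 + o1"
    using decomp[OF q1(1)] by blast
  obtain j2 where j2: "j2 < length U'" "Inv S m k U U' n j1 j2"
    and sh: "j1 \<le> j + 2 \<and> j \<le> j1 + 2 \<longrightarrow> int j2 - int j' = int j1 - int j"
    and rt: "j + 3 \<le> j1 \<longrightarrow> j' + 3 \<le> j2" and lf: "j1 + 3 \<le> j \<longrightarrow> j2 + 3 \<le> j'"
    using target[OF inv nk jj(1,2) jj1(1)] by blast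
  have w: "win (Dn m (Suc n)) U j = win (Dn m (Suc n)) U' j'" using inv unfolding Inv_def by simp
  have s1: "U ! j1 = U' ! j2" using win0[of "Dn m n" U j1 U' j2] j2 jj1 unfolding Inv_def by auto
  have s0: "U ! j = U' ! j'" using win0[OF w jj(1)] by simp
  have o1': "o1 < length (emb r s (U' ! j2))" using jj1 s1 by simp
  have o': "o' < length (emb r s (U' ! j'))" using jj s0 by simp
  define q2 where "q2 = pos r s U' j2 + o1"
  have eqo: "eq0 r s S m (W r s U) q1 (W r s U') q2"
    using eq0_main[OF j2(2) _ jj1(1) j2(1) jj1(2)] nk unfolding q2_def jj1(3) by simp
  have good: "Good r s S m k U U' n q1 q2"
    unfolding Good_def q2_def using jj1 j2 by blast
  have q2l: "q2 < length (W r s U')" unfolding q2_def using pos_lt_len[OF j2(1) o1'] .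
  have let1: "W r s U' ! q2 = W r s U ! q1"
    unfolding q2_def jj1(3) using W_nth[OF j2(1) o1'] W_nth[OF jj1(1,2)] s1 by simp
  have S1: "1 \<le> S" using SD by (simp add: Dn_def)
  have D2: "2 \<le> Dn m (Suc n)" by (simp add: Dn_def)
  have rest: "q2 \<noteq> q' \<and> (q < q1 \<longleftrightarrow> q' < q2) \<and> jumped (W r s U') q' q2 = jumped (W r s U) q q1"
  proof -
    consider (short) "j1 \<le> j + 2 \<and> j \<le> j1 + 2" | (right) "j + 3 \<le> j1" | (left) "j1 + 3 \<le> j" by linarith
    thus ?thesis
    proof cases
      case short
      have d: "int j2 - int j' = int j1 - int j" using sh short by simp
      define lo where "lo = min j j1"
      define lo' where "lo' = min j' j2"
      define c where "c = max j j1 - lo + 1"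
      have c: "lo + c \<le> length U" "lo' + c \<le> length U'" "c \<le> 3"
        using jj jj1 j2 d short unfolding lo_def lo'_def c_def by linarith+
      have un: "\<forall>t<c. U ! (lo + t) = U' ! (lo' + t)"
      proof (intro allI impI)
        fix t assume t: "t < c"
        have "lo + t < length U" "lo + t \<le> j + Dn m (Suc n)" "j \<le> lo + t + Dn m (Suc n)"
          using t c D2 unfolding lo_def c_def by linarith+
        from winN[OF w this] have "U ! (lo + t) = U' ! (j' + (lo + t) - j)" by simp
        moreover have "j' + (lo + t) - j = lo' + t" using d t unfolding lo_def lo'_def c_def by linarith
        ultimately show "U ! (lo + t) = U' ! (lo' + t)" by simp
      qed
      have tk: "take c (drop lo U) = take c (drop lo' U')" using un c by (intro nth_equalityI) auto
      note shA = shift(1)[OF tk c(1,2)] and shB = shift(2)[OF tk c(1,2)]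
      define a where "a = j - lo"
      define b where "b = j1 - lo"
      have ab: "j = lo + a" "j1 = lo + b" "j' = lo' + a" "j2 = lo' + b" "a < c" "b < c"
        using d unfolding a_def b_def lo_def lo'_def c_def by linarith+
      define M where "M = pos r s U (lo + c) - pos r s U lo"
      define t where "t = pos r s U j - pos r s U lo + o'"
      define t1 where "t1 = pos r s U j1 - pos r s U lo + o1"
      have pa: "pos r s U j - pos r s U lo = pos r s U' j' - pos r s U' lo'" using shA ab by simp
      have pb: "pos r s U j1 - pos r s U lo = pos r s U' j2 - pos r s U' lo'" using shA ab by simp
      have m1: "pos r s U lo \<le> pos r s U j" "pos r s U lo \<le> pos r s U j1" using pos_mono ab by simp_all
      have m2: "pos r s U' lo' \<le> pos r s U' j'" "pos r s U' lo' \<le> pos r s U' j2" using pos_mono ab by simp_all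
      have qq: "q = pos r s U lo + t" "q1 = pos r s U lo + t1" "q' = pos r s U' lo' + t" "q2 = pos r s U' lo' + t1"
        using jj jj1 m1 m2 pa pb unfolding t_def t1_def q2_def by simp_all
      have tM: "t < M" "t1 < M"
      proof -
        have "pos r s U j + o' < pos r s U (Suc j)" using pos_Suc[OF jj(1)] jj(3) by simp
        moreover have "pos r s U (Suc j) \<le> pos r s U (lo + c)" using pos_mono ab by simp
        ultimately show "t < M" using m1 unfolding t_def M_def by simp
        have "pos r s U j1 + o1 < pos r s U (Suc j1)" using pos_Suc[OF jj1(1)] jj1(2) by simp
        moreover have "pos r s U (Suc j1) \<le> pos r s U (lo + c)" using pos_mono ab by simp
        ultimately show "t1 < M" using m1 unfolding t1_def M_def by simp
      qed
      have J: "jumped (W r s U) q q1 = jumped (W r s U') q' q2"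
        unfolding qq using jumped_shift[OF shB[folded M_def] tM] .
      show ?thesis using J q1(2) unfolding qq by auto
    next
      case right
      have r2: "j' + 3 \<le> j2" using rt right by simp
      have lt: "q < q1" "q' < q2" using pos_less_iff[OF jj(1,3) jj1(1,2)] pos_less_iff[OF jj(2) o' j2(1) o1'] right r2
        unfolding jj(4,5) jj1(3) q2_def by auto
      obtain l where l: "j < l" "l < j1" "U ! l = UV"
        using findV[OF okU S1 right jj1(1)] by blast
      obtain l' where l': "j' < l'" "l' < j2" "U' ! l' = UV"
        using findV[OF okU' S1 r2 j2(1)] by blast
      have "jumped (W r s U) q q1 = set (vword r s)"
        unfolding jj(4) jj1(3) using jumped_full[OF l(1,2) jj1(1) l(3) jj(3) jj1(2)] .
      moreover have "jumped (W r s U') q' q2 = set (vword r s)"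
        unfolding jj(5) q2_def using jumped_full[OF l'(1,2) j2(1) l'(3) o' o1'] .
      ultimately show ?thesis using lt by auto
    next
      case left
      have r2: "j2 + 3 \<le> j'" using lf left by simp
      have lt: "q1 < q" "q2 < q'" using pos_less_iff[OF jj1(1,2) jj(1,3)] pos_less_iff[OF j2(1) o1' jj(2) o'] left r2
        unfolding jj(4,5) jj1(3) q2_def by auto
      obtain l where l: "j1 < l" "l < j" "U ! l = UV"
        using findV[OF okU S1 left jj(1)] by blast
      obtain l' where l': "j2 < l'" "l' < j'" "U' ! l' = UV"
        using findV[OF okU' S1 r2 jj(2)] by blast
      have "jumped (W r s U) q1 q = set (vword r s)"
        unfolding jj(4) jj1(3) using jumped_full[OF l(1,2) jj(1) l(3) jj1(2) jj(3)] .
      moreover have "jumped (W r s U') q2 q' = set (vword r s)"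
        unfolding jj(5) q2_def using jumped_full[OF l'(1,2) jj(2) l'(3) o1' o'] .
      ultimately show ?thesis using lt jumped_comm[of "W r s U" q1 q] jumped_comm[of "W r s U'" q2 q'] by auto
    qed
  qed
  have "answers (W r s U) q q1 (W r s U') q' q2"
    unfolding answers_def using q2l let1 rest by auto
  thus ?thesis using eqo good by blast
qed

lemma wins_Good:
  "n \<le> k \<Longrightarrow> Good r s S m k U U' n q q' \<Longrightarrow> wins r s S m n (W r s U) q (W r s U') q'"
proof (induction n arbitrary: q q')
  case 0 thus ?case by simp
next
  case (Suc n)
  interpret sw: gm r s S m k K U' U by (rule gm_swap)
  have nk: "n \<le> k" using Suc.prems by simp
  show ?case unfolding wins.simps
  proof (intro conjI allI impI)
    fix j1 assume j1: "j1 < length (W r s U) \<and> j1 \<noteq> q"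
    obtain q2 where "answers (W r s U) q j1 (W r s U') q' q2" "eq0 r s S m (W r s U) j1 (W r s U') q2"
        "Good r s S m k U U' n j1 q2"
      using HS[OF Suc.prems(2,1)] j1 by blast
    thus "\<exists>j2. answers (W r s U) q j1 (W r s U') q' j2 \<and> eq0 r s S m (W r s U) j1 (W r s U') j2 \<and>
          wins r s S m n (W r s U) j1 (W r s U') j2" using Suc.IH[OF nk] by blast
  next
    fix j2 assume j2: "j2 < length (W r s U') \<and> j2 \<noteq> q'"
    have G: "Good r s S m k U' U (Suc n) q' q" using Suc.prems(2) Good_sym by simp
    obtain q1 where "answers (W r s U') q' j2 (W r s U) q q1" "eq0 r s S m (W r s U') j2 (W r s U) q1"
        "Good r s S m k U' U n j2 q1"
      using sw.HS[OF G Suc.prems(1)] j2 by blast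
    moreover have "Good r s S m k U U' n q1 j2" using calculation(3) Good_sym by simp
    ultimately show "\<exists>j1. answers (W r s U') q' j2 (W r s U) q j1 \<and> eq0 r s S m (W r s U) j1 (W r s U') j2 \<and>
          wins r s S m n (W r s U) j1 (W r s U') j2" using Suc.IH[OF nk] eq0_sym by blast
  qed
qed

lemma half:
  assumes "1 \<le> k" "i1 < length (W r s U)"
  shows "\<exists>i2 < length (W r s U'). eq0 r s S m (W r s U) i1 (W r s U') i2 \<and> wins r s S m (k - 1) (W r s U) i1 (W r s U') i2"
proof -
  obtain j1 o1 where jj1: "j1 < length U" "o1 < length (emb r s (U ! j1))" "i1 = pos r s U j1 + o1"
    using decomp[OF assms(2)] by blast
  obtain j2 where j2: "j2 < length U'" "Inv S m k U U' (k - 1) j1 j2" using init[of "k - 1" j1] jj1 by auto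
  have s1: "U ! j1 = U' ! j2" using win0[of "Dn m (k - 1)" U j1 U' j2] j2 jj1 unfolding Inv_def by auto
  have o1': "o1 < length (emb r s (U' ! j2))" using jj1 s1 by simp
  have e: "eq0 r s S m (W r s U) i1 (W r s U') (pos r s U' j2 + o1)"
    using eq0_main[OF j2(2) _ jj1(1) j2(1) jj1(2)] jj1(3) by simp
  have g: "Good r s S m k U U' (k - 1) i1 (pos r s U' j2 + o1)" unfolding Good_def using jj1 j2 by blast
  show ?thesis using e wins_Good[OF _ g] pos_lt_len[OF j2(1) o1'] by auto
qed

lemma eqk_gm: "1 \<le> k \<Longrightarrow> eqk r s S m k (W r s U) (W r s U')"
proof -
  assume k: "1 \<le> k"
  interpret sw: gm r s S m k K U' U by (rule gm_swap)
  show ?thesis unfolding eqk_def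
  proof (intro conjI allI impI)
    fix i1 assume "i1 < length (W r s U)"
    thus "\<exists>i2<length (W r s U'). eq0 r s S m (W r s U) i1 (W r s U') i2 \<and> wins r s S m (k - 1) (W r s U) i1 (W r s U') i2"
      using half[OF k] by blast
  next
    fix i2 assume "i2 < length (W r s U')"
    thus "\<exists>i1<length (W r s U). eq0 r s S m (W r s U) i1 (W r s U') i2 \<and> wins r s S m (k - 1) (W r s U) i1 (W r s U') i2"
      using sw.half[OF k] eq0_sym wins_sym by metis
  qed
qed

end

definition pat :: "fsym list" where "pat = [FV, FA, FV, FB, FV]"
definition fl1 :: "nat \<Rightarrow> fsym list" where "fl1 T = concat (replicate (2 * T) pat)"
definition fl2 :: "nat \<Rightarrow> fsym list" where "fl2 T = concat (replicate T pat) @ [FA] @ concat (replicate T pat)"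
definition PP :: "nat \<Rightarrow> usym list" where "PP S = replicate S UV @ [UA] @ replicate S UV @ [UB] @ replicate S UV"

lemma UU_append: "UU S (xs @ ys) = UU S xs @ UU S ys" by (simp add: UU_def)
lemma UU_rep: "UU S (concat (replicate n xs)) = concat (replicate n (UU S xs))"
  by (induction n) (auto simp: UU_append)
lemma UU_pat: "UU S pat = PP S" by (simp add: pat_def expand_def PP_def)
lemma len_PP: "length (PP S) = pp S" by (simp add: PP_def pp_def)
lemma W_rep: "W r s (concat (replicate n xs)) = concat (replicate n (W r s xs))"
  by (induction n) auto
lemma W_PP: "W r s (PP S) = wpow (vword r s) S @ boldA r @ wpow (vword r s) S @ boldB s @ wpow (vword r s) S"
  by (simp add: PP_def W_replicate emb_def)

lemma U1_eq: "UU S (fl1 T) = concat (replicate (2 * T) (PP S))"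
  by (simp add: fl1_def UU_rep UU_pat)
lemma U2_eq: "UU S (fl2 T) = concat (replicate T (PP S)) @ [UA] @ concat (replicate T (PP S))"
  by (simp add: fl2_def UU_rep UU_pat UU_append expand_def)

lemma W_U1: "W r s (UU S (fl1 T)) = Xword r s S T @ Xword r s S T"
proof -
  have "concat (replicate (2 * T) (W r s (PP S))) = concat (replicate T (W r s (PP S))) @ concat (replicate T (W r s (PP S)))"
    by (simp add: mult_2 replicate_add)
  thus ?thesis by (simp add: U1_eq W_rep Xword_def wpow_def W_PP)
qed

lemma W_U2: "W r s (UU S (fl2 T)) = Xword r s S T @ boldA r @ Xword r s S T"
  by (simp add: U2_eq W_rep Xword_def wpow_def W_PP emb_def)

lemma nth_concat_rep: "i < n * length xs \<Longrightarrow> concat (replicate n xs) ! i = xs ! (i mod length xs)"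
proof (induction n arbitrary: i)
  case 0 thus ?case by simp
next
  case (Suc n)
  show ?case
  proof (cases "i < length xs")
    case True thus ?thesis by (simp add: nth_append)
  next
    case False
    hence "i - length xs < n * length xs" using Suc.prems by simp
    hence "concat (replicate n xs) ! (i - length xs) = xs ! ((i - length xs) mod length xs)" using Suc.IH by simp
    moreover have "(i - length xs) mod length xs = i mod length xs" using False by (simp add: le_mod_geq)
    ultimately show ?thesis using False by (simp add: nth_append)
  qed
qed

lemma PP_nth: "i < pp S \<Longrightarrow> PP S ! i = Pn S i"
proof -
  assume i: "i < pp S"
  consider "i < S" | "i = S" | "S < i" "i < 2 * S + 1" | "i = 2 * S + 1" | "2 * S + 1 < i" by linarith
  thus ?thesis
  proof cases
    case 1 thus ?thesis by (simp add: PP_def Pn_def nth_append)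
  next
    case 2 thus ?thesis by (simp add: PP_def Pn_def nth_append)
  next
    case 3
    hence "i - S = Suc (i - S - 1)" by simp
    thus ?thesis using 3 by (simp add: PP_def Pn_def nth_append)
  next
    case 4
    thus ?thesis by (simp add: PP_def Pn_def nth_append)
  next
    case 5
    hence "i - S = Suc (i - S - 1)" "i - S - 1 - S = Suc (i - S - 1 - S - 1)" by simp_all
    thus ?thesis using 5 i by (simp add: PP_def Pn_def nth_append pp_def)
  qed
qed

lemma pp_pos: "0 < pp S" by (simp add: pp_def)

lemma len_U1: "length (UU S (fl1 T)) = 2 * T * pp S" by (simp add: U1_eq length_concat len_PP sum_list_replicate)
lemma len_U2: "length (UU S (fl2 T)) = 2 * T * pp S + 1" by (simp add: U2_eq length_concat len_PP sum_list_replicate)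

lemma U1_nth: "i < 2 * T * pp S \<Longrightarrow> UU S (fl1 T) ! i = Pn S (i mod pp S)"
  unfolding U1_eq using nth_concat_rep[of i "2 * T" "PP S"] PP_nth[of "i mod pp S" S] pp_pos[of S]
  by (simp add: len_PP)

lemma U2_nth_lo: "i < T * pp S \<Longrightarrow> UU S (fl2 T) ! i = Pn S (i mod pp S)"
  unfolding U2_eq using nth_concat_rep[of i T "PP S"] PP_nth[of "i mod pp S" S] pp_pos[of S]
  by (simp add: len_PP nth_append length_concat sum_list_replicate)

lemma U2_nth_J: "UU S (fl2 T) ! (T * pp S) = UA"
  unfolding U2_eq by (simp add: len_PP nth_append length_concat sum_list_replicate)

lemma U2_nth_hi: "T * pp S < i \<Longrightarrow> i < 2 * T * pp S + 1 \<Longrightarrow> UU S (fl2 T) ! i = Pn S ((i - 1) mod pp S)"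
proof -
  assume i: "T * pp S < i" "i < 2 * T * pp S + 1"
  have "UU S (fl2 T) ! i = concat (replicate T (PP S)) ! (i - T * pp S - 1)"
    unfolding U2_eq using i by (simp add: len_PP nth_append length_concat sum_list_replicate)
  also have "... = Pn S ((i - T * pp S - 1) mod pp S)"
    using nth_concat_rep[of "i - T * pp S - 1" T "PP S"] PP_nth[of "(i - T * pp S - 1) mod pp S" S] pp_pos[of S] i
    by (simp add: len_PP)
  also have "(i - T * pp S - 1) mod pp S = (i - 1) mod pp S"
  proof -
    have "i - 1 = (i - T * pp S - 1) + T * pp S" using i by simp
    thus ?thesis by (metis mod_mult_self1 mult.commute)
  qed
  finally show ?thesis .
qed

lemma okV_rep: "okV (concat (replicate n pat))"
proof (induction n)
  case 0 thus ?case by (simp add: okV_def)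
next
  case (Suc n)
  have p: "okV pat" unfolding okV_def pat_def
    by (auto simp: less_Suc_eq nth_Cons split: nat.split) 
  show ?case
  proof (cases n)
    case 0 thus ?thesis using p by simp
  next
    case (Suc n')
    have "hd (concat (replicate n pat)) = FV" using Suc by (simp add: pat_def)
    thus ?thesis using okV_append[OF p Suc.IH] Suc by (simp add: pat_def)
  qed
qed

lemma hd_rep: "1 \<le> n \<Longrightarrow> hd (concat (replicate n pat)) = FV" by (cases n) (auto simp: pat_def)
lemma last_rep: "1 \<le> n \<Longrightarrow> last (concat (replicate n pat)) = FV"
  by (induction n) (auto simp: pat_def)
lemma ne_rep: "1 \<le> n \<Longrightarrow> concat (replicate n pat) \<noteq> []" by (cases n) (auto simp: pat_def)

lemma fl1_ok: "1 \<le> T \<Longrightarrow> fl1 T \<noteq> [] \<and> hd (fl1 T) = FV \<and> last (fl1 T) = FV \<and> okV (fl1 T)"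
  unfolding fl1_def using hd_rep[of "2 * T"] last_rep[of "2 * T"] ne_rep[of "2 * T"] okV_rep by simp

lemma fl2_ok: "1 \<le> T \<Longrightarrow> fl2 T \<noteq> [] \<and> hd (fl2 T) = FV \<and> last (fl2 T) = FV \<and> okV (fl2 T)"
proof -
  assume T: "1 \<le> T"
  let ?C = "concat (replicate T pat)"
  have a: "okV ([FA] @ ?C)" using okV_append[of "[FA]" ?C] okV_rep hd_rep[OF T] ne_rep[OF T] by (simp add: okV_def)
  have "okV (?C @ [FA] @ ?C)" using okV_append[OF okV_rep a] ne_rep[OF T] last_rep[OF T] by simp
  thus ?thesis unfolding fl2_def using hd_rep[OF T] last_rep[OF T] ne_rep[OF T] by simp
qed


lemma Pn_V: "Pn S i = UV \<longleftrightarrow> i \<noteq> S \<and> i \<noteq> 2 * S + 1" by (simp add: Pn_def)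

lemma MODL:
  assumes "0 < p" "0 \<le> int x + l"
  shows "nat (int x + l) mod p = nat ((int (x mod p) + l) mod int p)"
proof -
  have "int (nat (int x + l) mod p) = (int x + l) mod int p" using assms by (simp add: zmod_int)
  also have "... = (int x mod int p + l) mod int p" by (simp add: mod_add_left_eq)
  also have "... = (int (x mod p) + l) mod int p" by (simp add: zmod_int)
  finally show ?thesis by (metis nat_int)
qed

lemma divmod_split: "(x::nat) = (x div p) * p + x mod p" using div_mult_mod_eq[of x p] by simp

lemma RES:
  fixes x p \<rho> :: nat
  assumes "0 < p" "\<rho> < p"
  shows "\<exists>j. x \<le> j \<and> j < x + p \<and> j mod p = \<rho>"
proof -
  define j0 where "j0 = \<rho> + (x div p) * p"
  have m0: "j0 mod p = \<rho>" unfolding j0_def using assms by (subst mod_mult_self1) simp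
  have a: "(x div p) * p \<le> x" using divmod_split[of x p] by linarith
  have b: "x < (x div p) * p + p" using assms by (metis add.commute div_mult_mod_eq mod_less_divisor nat_add_left_cancel_less)
  have j0a: "j0 < x + p" using a assms unfolding j0_def by linarith
  have j0b: "x < j0 + p" using b unfolding j0_def by linarith
  show ?thesis
  proof (cases "x \<le> j0")
    case True thus ?thesis using m0 j0a by blast
  next
    case False
    have "(j0 + p) mod p = \<rho>" using m0 by simp
    thus ?thesis using False j0b by (intro exI[of _ "j0 + p"]) auto
  qed
qed

lemma iso1:
  assumes "x < y" "Pn S (x mod pp S) \<noteq> UV" "Pn S (y mod pp S) \<noteq> UV"
  shows "S < y - x"
proof -
  let ?p = "pp S"
  have rx: "x mod ?p = S \<or> x mod ?p = 2 * S + 1" "y mod ?p = S \<or> y mod ?p = 2 * S + 1"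
    using assms by (auto simp: Pn_def split: if_splits)
  have dm: "x div ?p \<le> y div ?p" using assms(1) by (simp add: div_le_mono)
  show ?thesis
  proof (cases "x div ?p = y div ?p")
    case True
    have ex: "x = (x div ?p) * ?p + x mod ?p" and ey: "y = (x div ?p) * ?p + y mod ?p"
      using divmod_split[of x ?p] divmod_split[of y ?p] True by simp_all
    hence "y - x = y mod ?p - x mod ?p" "x mod ?p < y mod ?p" using assms(1) by linarith+
    thus ?thesis using rx by auto
  next
    case False
    hence "x div ?p + 1 \<le> y div ?p" using dm by simp
    hence "(x div ?p + 1) * ?p \<le> (y div ?p) * ?p" by (rule mult_le_mono1)
    hence "(x div ?p) * ?p + ?p \<le> (y div ?p) * ?p" by simp
    moreover have "x mod ?p \<le> 2 * S + 1" "S \<le> y mod ?p" using rx by auto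
    ultimately show ?thesis using divmod_split[of x ?p] divmod_split[of y ?p] unfolding pp_def by linarith
  qed
qed

lemma isoJ:
  assumes "x < c * pp S" "Pn S (x mod pp S) \<noteq> UV"
  shows "S < c * pp S - x"
proof -
  let ?p = "pp S"
  have rx: "x mod ?p \<le> 2 * S + 1" using assms by (auto simp: Pn_def split: if_splits)
  have "x div ?p < c" using assms(1) by (metis div_less_iff_less_mult pp_pos)
  hence "x div ?p + 1 \<le> c" by simp
  hence "(x div ?p + 1) * ?p \<le> c * ?p" by (rule mult_le_mono1)
  hence "(x div ?p) * ?p + ?p \<le> c * ?p" by simp
  thus ?thesis using divmod_split[of x ?p] rx unfolding pp_def by linarith
qed

lemma mod_top:
  fixes b p n :: nat
  assumes "b < p" "1 \<le> n"
  shows "(n * p - Suc b) mod p = p - Suc b"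
proof -
  have "n * p = (n - 1) * p + p" using assms by (cases n) auto
  hence e: "n * p - Suc b = (p - Suc b) + (n - 1) * p" using assms by linarith
  show ?thesis unfolding e by (subst mod_mult_self1) (use assms in simp)
qed


lemma perU1:
  assumes "D \<le> j" "j + D < 2 * T * pp S"
  shows "win D (UU S (fl1 T)) j = perwin S D (j mod pp S)"
proof
  fix l
  show "win D (UU S (fl1 T)) j l = perwin S D (j mod pp S) l"
  proof (cases "\<bar>l\<bar> \<le> int D")
    case True
    have r: "0 \<le> int j + l" "int j + l < int (length (UU S (fl1 T)))" using True assms len_U1[of S T] by linarith+
    have "nat (int j + l) < 2 * T * pp S" using r len_U1[of S T] by linarith
    hence "UU S (fl1 T) ! nat (int j + l) = Pn S (nat ((int (j mod pp S) + l) mod int (pp S)))"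
      using U1_nth MODL[OF pp_pos r(1)] by simp
    thus ?thesis using True r unfolding win_def perwin_def by simp
  next
    case False thus ?thesis unfolding win_def perwin_def by simp
  qed
qed

lemma perA:
  assumes "D \<le> j" "j + D < T * pp S"
  shows "win D (UU S (fl2 T)) j = perwin S D (j mod pp S)"
proof
  fix l
  show "win D (UU S (fl2 T)) j l = perwin S D (j mod pp S) l"
  proof (cases "\<bar>l\<bar> \<le> int D")
    case True
    have r: "0 \<le> int j + l" "int j + l < int (length (UU S (fl2 T)))" using True assms len_U2[of S T] by linarith+
    have "nat (int j + l) < T * pp S" using r assms True by linarith
    hence "UU S (fl2 T) ! nat (int j + l) = Pn S (nat ((int (j mod pp S) + l) mod int (pp S)))"
      using U2_nth_lo MODL[OF pp_pos r(1)] by simp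
    thus ?thesis using True r unfolding win_def perwin_def by simp
  next
    case False thus ?thesis unfolding win_def perwin_def by simp
  qed
qed

lemma perB:
  assumes "T * pp S + D < j" "j + D < 2 * T * pp S + 1"
  shows "win D (UU S (fl2 T)) j = perwin S D ((j - 1) mod pp S)"
proof
  fix l
  show "win D (UU S (fl2 T)) j l = perwin S D ((j - 1) mod pp S) l"
  proof (cases "\<bar>l\<bar> \<le> int D")
    case True
    have r: "0 \<le> int j + l" "int j + l < int (length (UU S (fl2 T)))" using True assms len_U2[of S T] by linarith+
    have i: "T * pp S < nat (int j + l)" "nat (int j + l) < 2 * T * pp S + 1" using r assms True by linarith+
    have r1: "0 \<le> int (j - 1) + l" using assms True by linarith
    have e: "nat (int j + l) - 1 = nat (int (j - 1) + l)" using assms True by linarith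
    have "UU S (fl2 T) ! nat (int j + l) = Pn S (nat ((int ((j - 1) mod pp S) + l) mod int (pp S)))"
      using U2_nth_hi[OF i] MODL[OF pp_pos r1] e by simp
    thus ?thesis using True r unfolding win_def perwin_def by simp
  next
    case False thus ?thesis unfolding win_def perwin_def by simp
  qed
qed

lemma perC:
  assumes "T * pp S \<le> j + D" "j \<le> T * pp S + D" "2 * D + 1 \<le> S" "1 \<le> T"
  shows "win D (UU S (fl2 T)) j = perwin S D (j + S - T * pp S)"
proof
  fix l
  define J where "J = T * pp S"
  define p where "p = pp S"
  have pJ: "p \<le> J" unfolding J_def p_def using assms(4) by simp
  have p3: "p = 3 * S + 2" unfolding p_def pp_def by simp
  show "win D (UU S (fl2 T)) j l = perwin S D (j + S - T * pp S) l"
  proof (cases "\<bar>l\<bar> \<le> int D")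
    case True
    have r: "0 \<le> int j + l" "int j + l < int (length (UU S (fl2 T)))"
    proof -
      have a: "J \<le> j + D" "j \<le> J + D" "length (UU S (fl2 T)) = 2 * J + 1"
        using assms len_U2[of S T] unfolding J_def p_def by simp_all
      show "0 \<le> int j + l" "int j + l < int (length (UU S (fl2 T)))" using a True pJ p3 assms(3) by linarith+
    qed
    define i where "i = nat (int j + l)"
    have ii: "int i = int j + l" using r unfolding i_def by simp
    have ib: "J \<le> i + 2 * D" "i \<le> J + 2 * D" using ii assms True unfolding J_def by linarith+
    have ri: "nat ((int (j + S - J) + l) mod int p) = S + i - J"
    proof -
      have "int (j + S - J) + l = int (S + i - J)" using ii assms ib unfolding J_def by linarith
      moreover have "S + i - J < p" using ib assms p3 by linarith
      ultimately show ?thesis by (simp add: zmod_int)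
    qed
    have lhs: "win D (UU S (fl2 T)) j l = Some (UU S (fl2 T) ! i)" using True r unfolding win_def i_def by simp
    have rhs: "perwin S D (j + S - T * pp S) l = Some (Pn S (S + i - J))"
      using True ri unfolding perwin_def J_def p_def by simp
    have "UU S (fl2 T) ! i = Pn S (S + i - J)"
    proof -
      consider "i = J" | "i < J" | "J < i" by linarith
      thus ?thesis
      proof cases
        case 1 thus ?thesis using U2_nth_J[of S T] unfolding J_def by (simp add: Pn_def)
      next
        case 2
        define b where "b = J - i - 1"
        have b: "b < p" "i = T * p - Suc b" using 2 ib assms p3 unfolding b_def J_def p_def by linarith+
        have "i mod p = p - Suc b" using mod_top[OF b(1) assms(4)] b(2) by simp
        hence "UU S (fl2 T) ! i = Pn S (p - Suc b)" using U2_nth_lo[of i T S] 2 unfolding J_def p_def by simp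
        moreover have "Pn S (p - Suc b) = UV" using b ib assms p3 unfolding b_def Pn_def by auto
        moreover have "Pn S (S + i - J) = UV" using 2 ib assms unfolding Pn_def by auto
        ultimately show ?thesis by simp
      next
        case 3
        have e: "i - 1 = (i - 1 - J) + T * p" using 3 unfolding J_def p_def by simp
        have lt: "i - 1 - J < p" using ib assms p3 by linarith
        have "(i - 1) mod p = i - 1 - J" by (subst e, subst mod_mult_self1) (use lt in simp)
        moreover have "i < 2 * T * pp S + 1" using r len_U2[of S T] ii by linarith
        ultimately have "UU S (fl2 T) ! i = Pn S (i - 1 - J)" using U2_nth_hi[of T S i] 3 unfolding J_def p_def by simp
        moreover have "Pn S (i - 1 - J) = UV" using ib assms unfolding Pn_def by auto
        moreover have "Pn S (S + i - J) = UV" using 3 ib assms unfolding Pn_def by auto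
        ultimately show ?thesis by simp
      qed
    qed
    thus ?thesis using lhs rhs by simp
  next
    case False thus ?thesis unfolding win_def perwin_def by simp
  qed
qed


lemma Pn_last: "i < S \<Longrightarrow> Pn S (pp S - Suc i) = UV" by (auto simp: Pn_def pp_def)

lemma lenE:
  assumes SD: "2 * Dn m k + 2 \<le> S" and T: "4 * k + 7 \<le> T"
  shows "2 * En S m k k + 3 * pp S + 2 \<le> 2 * T * pp S" and "En S m k k + Dn m k + 1 \<le> T * pp S"
proof -
  have Dp: "Dn m k + 4 \<le> pp S" using SD by (simp add: pp_def)
  have "En S m k k \<le> (k + 1) * (4 * pp S)" unfolding En_def using Dp by (intro mult_le_mono2) linarith
  hence E: "En S m k k \<le> (4 * k + 4) * pp S" by (simp add: algebra_simps)
  have p2: "2 \<le> pp S" by (simp add: pp_def)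
  have "(8 * k + 12) * pp S \<le> (2 * T) * pp S" using T by (intro mult_le_mono1) linarith
  thus "2 * En S m k k + 3 * pp S + 2 \<le> 2 * T * pp S" using E p2 by (simp add: algebra_simps)
  have "(4 * k + 5) * pp S \<le> T * pp S" using T by (intro mult_le_mono1) linarith
  thus "En S m k k + Dn m k + 1 \<le> T * pp S" using E Dp by (simp add: algebra_simps)
qed

lemma wordok_U1:
  assumes rs: "1 \<le> r" "1 \<le> s" and SD: "2 * Dn m k + 2 \<le> S" and T: "4 * k + 7 \<le> T"
  shows "wordok r s S m k (UU S (fl1 T))"
proof -
  interpret rs r s using rs by unfold_locales
  let ?U = "UU S (fl1 T)"
  have L: "length ?U = 2 * T * pp S" by (rule len_U1)
  have S1: "1 \<le> S" "2 * Dn m k + 1 \<le> S" using SD by (simp_all add: Dn_def)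
  have T1: "1 \<le> T" using T by simp
  have p: "S < pp S" by (simp add: pp_def)
  have len: "2 * En S m k k + 3 * pp S + 2 \<le> length ?U" using lenE[OF SD T] L by simp
  have first: "\<forall>i<S. ?U ! i = UV"
  proof (intro allI impI)
    fix i assume i: "i < S"
    hence "i < 2 * T * pp S" using L len p by linarith
    thus "?U ! i = UV" using U1_nth i p by (simp add: Pn_def)
  qed
  have last: "\<forall>i<S. ?U ! (length ?U - Suc i) = UV"
  proof (intro allI impI)
    fix i assume i: "i < S"
    have "length ?U - Suc i < 2 * T * pp S" using L len by linarith
    hence "?U ! (length ?U - Suc i) = Pn S ((2 * T * pp S - Suc i) mod pp S)" using U1_nth L by simp
    also have "(2 * T * pp S - Suc i) mod pp S = pp S - Suc i"
      using mod_top[of i "pp S" "2 * T"] i p T1 by (simp add: mult.assoc)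
    finally show "?U ! (length ?U - Suc i) = UV" using Pn_last i by simp
  qed
  have iso: "\<forall>i i'. i < i' \<longrightarrow> i' < length ?U \<longrightarrow> ?U ! i \<noteq> UV \<longrightarrow> ?U ! i' \<noteq> UV \<longrightarrow> S < i' - i"
    using iso1 U1_nth L by (metis order.strict_trans)
  have per: "\<forall>D j. D \<le> Dn m k \<longrightarrow> D \<le> j \<longrightarrow> j + D < length ?U \<longrightarrow> (\<exists>\<rho> < pp S. win D ?U j = perwin S D \<rho>)"
    using perU1 L pp_pos by (metis mod_less_divisor)
  have cov: "\<forall>D x \<rho>. D \<le> Dn m k \<longrightarrow> \<rho> < pp S \<longrightarrow> D \<le> x \<longrightarrow> x + 3 * pp S + D < length ?U \<longrightarrow>
        (\<exists>j. x \<le> j \<and> j \<le> x + 3 * pp S \<and> win D ?U j = perwin S D \<rho>)"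
  proof (intro allI impI)
    fix D x \<rho> assume a: "D \<le> Dn m k" "\<rho> < pp S" "D \<le> x" "x + 3 * pp S + D < length ?U"
    obtain j where j: "x \<le> j" "j < x + pp S" "j mod pp S = \<rho>" using RES[OF pp_pos a(2)] by blast
    have "win D ?U j = perwin S D \<rho>" using perU1[of D j T S] j a L by simp
    thus "\<exists>j. x \<le> j \<and> j \<le> x + 3 * pp S \<and> win D ?U j = perwin S D \<rho>" using j by (intro exI[of _ j]) auto
  qed
  have nb: "nbhds r s S m (W r s ?U) = NB r s m ?U"
    unfolding NB_def using nbhds_char[of S "fl1 T" m] fl1_ok[OF T1] S1 by simp
  show ?thesis unfolding wordok_def using len first last iso per cov nb by blast
qed

lemma wordok_U2:
  assumes rs: "1 \<le> r" "1 \<le> s" and SD: "2 * Dn m k + 2 \<le> S" and T: "4 * k + 7 \<le> T"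
  shows "wordok r s S m k (UU S (fl2 T))"
proof -
  interpret rs r s using rs by unfold_locales
  let ?U = "UU S (fl2 T)"
  define J where "J = T * pp S"
  have L: "length ?U = 2 * J + 1" unfolding J_def using len_U2[of S T] by simp
  have S1: "1 \<le> S" "2 * Dn m k + 1 \<le> S" using SD by (simp_all add: Dn_def)
  have T1: "1 \<le> T" using T by simp
  have p: "S < pp S" by (simp add: pp_def)
  have pJ: "pp S \<le> J" unfolding J_def using T1 by simp
  have len: "2 * En S m k k + 3 * pp S + 2 \<le> length ?U" using lenE[OF SD T] L unfolding J_def by simp
  have lo: "\<And>i. i < J \<Longrightarrow> ?U ! i = Pn S (i mod pp S)" unfolding J_def by (rule U2_nth_lo)
  have hi: "\<And>i. J < i \<Longrightarrow> i < 2 * J + 1 \<Longrightarrow> ?U ! i = Pn S ((i - 1) mod pp S)"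
    unfolding J_def using U2_nth_hi by simp
  have mid: "?U ! J = UA" unfolding J_def by (rule U2_nth_J)
  have first: "\<forall>i<S. ?U ! i = UV"
  proof (intro allI impI)
    fix i assume i: "i < S"
    hence "i < J" using pJ p by linarith
    thus "?U ! i = UV" using lo i p by (simp add: Pn_def)
  qed
  have last: "\<forall>i<S. ?U ! (length ?U - Suc i) = UV"
  proof (intro allI impI)
    fix i assume i: "i < S"
    have e: "length ?U - Suc i = 2 * J - i" using L by simp
    have "J < 2 * J - i" "2 * J - i < 2 * J + 1" using i pJ p by linarith+
    hence "?U ! (length ?U - Suc i) = Pn S ((2 * J - i - 1) mod pp S)" using hi e by simp
    also have "(2 * J - i - 1) mod pp S = pp S - Suc i"
      using mod_top[of i "pp S" "2 * T"] i p T1 unfolding J_def by (simp add: mult.assoc)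
    finally show "?U ! (length ?U - Suc i) = UV" using Pn_last i by simp
  qed
  have iso: "\<forall>i i'. i < i' \<longrightarrow> i' < length ?U \<longrightarrow> ?U ! i \<noteq> UV \<longrightarrow> ?U ! i' \<noteq> UV \<longrightarrow> S < i' - i"
  proof (intro allI impI)
    fix i i' assume a: "i < i'" "i' < length ?U" "?U ! i \<noteq> UV" "?U ! i' \<noteq> UV"
    consider "i' < J" | "i < J" "J \<le> i'" | "i = J" | "J < i" by linarith
    thus "S < i' - i"
    proof cases
      case 1 thus ?thesis using a lo iso1 by (metis order.strict_trans)
    next
      case 2
      have "S < T * pp S - i" using isoJ[of i T S] 2 a(3) lo unfolding J_def by simp
      thus ?thesis using 2 unfolding J_def by linarith
    next
      case 3
      have "Pn S ((i' - 1) mod pp S) \<noteq> UV" using hi a 3 L by simp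
      hence "S \<le> (i' - 1) mod pp S" by (auto simp: Pn_def split: if_splits)
      moreover have "(i' - 1) mod pp S = (i' - 1 - J) mod pp S"
      proof -
        have "i' - 1 = (i' - 1 - J) + T * pp S" using a 3 unfolding J_def by simp
        thus ?thesis by (metis mod_mult_self1)
      qed
      moreover have "(i' - 1 - J) mod pp S \<le> i' - 1 - J" by simp
      ultimately show ?thesis using a 3 by linarith
    next
      case 4
      have "Pn S ((i - 1) mod pp S) \<noteq> UV" "Pn S ((i' - 1) mod pp S) \<noteq> UV" using hi a 4 L by simp_all
      moreover have "i - 1 < i' - 1" using a 4 by linarith
      ultimately have "S < (i' - 1) - (i - 1)" using iso1 by blast
      thus ?thesis using a 4 by linarith
    qed
  qed
  have per: "\<forall>D j. D \<le> Dn m k \<longrightarrow> D \<le> j \<longrightarrow> j + D < length ?U \<longrightarrow> (\<exists>\<rho> < pp S. win D ?U j = perwin S D \<rho>)"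
  proof (intro allI impI)
    fix D j assume a: "D \<le> Dn m k" "D \<le> j" "j + D < length ?U"
    have DS: "2 * D + 1 \<le> S" using a S1 by linarith
    consider "j + D < J" | "J + D < j" | "J \<le> j + D" "j \<le> J + D" by linarith
    thus "\<exists>\<rho> < pp S. win D ?U j = perwin S D \<rho>"
    proof cases
      case 1
      have "win D ?U j = perwin S D (j mod pp S)" using perA[of D j T S] a 1 unfolding J_def by simp
      thus ?thesis using mod_less_divisor[OF pp_pos] by blast
    next
      case 2
      have "win D ?U j = perwin S D ((j - 1) mod pp S)" using perB[of T S D j] a 2 L unfolding J_def by simp
      thus ?thesis using mod_less_divisor[OF pp_pos] by blast
    next
      case 3
      have "j + S - J < pp S" using 3 DS p unfolding pp_def by linarith
      thus ?thesis using perC[of T S j D] 3 DS T1 unfolding J_def by blast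
    qed
  qed
  have cov: "\<forall>D x \<rho>. D \<le> Dn m k \<longrightarrow> \<rho> < pp S \<longrightarrow> D \<le> x \<longrightarrow> x + 3 * pp S + D < length ?U \<longrightarrow>
        (\<exists>j. x \<le> j \<and> j \<le> x + 3 * pp S \<and> win D ?U j = perwin S D \<rho>)"
  proof (intro allI impI)
    fix D x \<rho> assume a: "D \<le> Dn m k" "\<rho> < pp S" "D \<le> x" "x + 3 * pp S + D < length ?U"
    have DS: "2 * D + 1 \<le> S" using a S1 by linarith
    have Dp: "2 * D \<le> pp S" using DS unfolding pp_def by linarith
    consider "x + pp S + D \<le> J" | "J + D < x" | "J < x + pp S + D" "x \<le> J + D" by linarith
    thus "\<exists>j. x \<le> j \<and> j \<le> x + 3 * pp S \<and> win D ?U j = perwin S D \<rho>"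
    proof cases
      case 1
      obtain j where j: "x \<le> j" "j < x + pp S" "j mod pp S = \<rho>" using RES[OF pp_pos a(2)] by blast
      have "win D ?U j = perwin S D \<rho>" using perA[of D j T S] j a 1 unfolding J_def by simp
      thus ?thesis using j by (intro exI[of _ j]) auto
    next
      case 2
      obtain j0 where j: "x - 1 \<le> j0" "j0 < x - 1 + pp S" "j0 mod pp S = \<rho>" using RES[OF pp_pos a(2)] by blast
      have x1: "1 \<le> x" using 2 by linarith
      have "win D ?U (Suc j0) = perwin S D ((Suc j0 - 1) mod pp S)"
        using perB[of T S D "Suc j0"] j a 2 L x1 unfolding J_def by simp
      thus ?thesis using j x1 by (intro exI[of _ "Suc j0"]) auto
    next
      case 3
      obtain j0 where j: "J + D \<le> j0" "j0 < J + D + pp S" "j0 mod pp S = \<rho>" using RES[OF pp_pos a(2)] by blast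
      have "win D ?U (Suc j0) = perwin S D ((Suc j0 - 1) mod pp S)"
        using perB[of T S D "Suc j0"] j a 3 L Dp unfolding J_def by simp
      thus ?thesis using j 3 Dp by (intro exI[of _ "Suc j0"]) auto
    qed
  qed
  have nb: "nbhds r s S m (W r s ?U) = NB r s m ?U"
    unfolding NB_def using nbhds_char[of S "fl2 T" m] fl2_ok[OF T1] S1 by simp
  show ?thesis unfolding wordok_def using len first last iso per cov nb by blast
qed


lemma gm_U12:
  assumes rs: "1 \<le> r" "1 \<le> s" and SD: "2 * Dn m k + 2 \<le> S" and T: "4 * k + 7 \<le> T"
  shows "gm r s S m k (T * pp S) (UU S (fl1 T)) (UU S (fl2 T))"
proof -
  have T1: "1 \<le> T" using T by simp
  have L1: "length (UU S (fl1 T)) = 2 * (T * pp S)" using len_U1[of S T] by simp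
  have L2: "length (UU S (fl2 T)) = 2 * (T * pp S) + 1" using len_U2[of S T] by simp
  have pre: "\<forall>i<T * pp S. UU S (fl1 T) ! i = UU S (fl2 T) ! i"
  proof (intro allI impI)
    fix i assume i: "i < T * pp S"
    hence "i < 2 * T * pp S" by simp
    thus "UU S (fl1 T) ! i = UU S (fl2 T) ! i" using U1_nth U2_nth_lo i by simp
  qed
  have suf: "\<forall>i<T * pp S. UU S (fl1 T) ! (length (UU S (fl1 T)) - Suc i) = UU S (fl2 T) ! (length (UU S (fl2 T)) - Suc i)"
  proof (intro allI impI)
    fix i assume i: "i < T * pp S"
    have a: "length (UU S (fl1 T)) - Suc i < 2 * T * pp S" using L1 i by simp
    have b: "T * pp S < length (UU S (fl2 T)) - Suc i" "length (UU S (fl2 T)) - Suc i < 2 * T * pp S + 1"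
      using L2 i by simp_all
    have c: "length (UU S (fl2 T)) - Suc i - 1 = length (UU S (fl1 T)) - Suc i" using L1 L2 i by simp
    show "UU S (fl1 T) ! (length (UU S (fl1 T)) - Suc i) = UU S (fl2 T) ! (length (UU S (fl2 T)) - Suc i)"
      using U1_nth[OF a] U2_nth_hi[OF b] c by simp
  qed
  show ?thesis
    using rs wordok_U1[OF rs SD T] wordok_U2[OF rs SD T] SD lenE[OF SD T] L1 L2 pre suf
    by unfold_locales auto
qed

theorem lemma14:
  fixes r s m k :: nat
  assumes "r \<ge> 1" and "s \<ge> 1" and "k \<ge> 1"
  shows "\<exists>R. \<forall>S T. S \<ge> R \<and> T \<ge> R \<longrightarrow>
           eqk r s S m k (Xword r s S T @ Xword r s S T)
                         (Xword r s S T @ boldA r @ Xword r s S T)"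
proof (intro exI[of _ "4 * m + 4 * k + 10"] allI impI)
  fix S T assume a: "4 * m + 4 * k + 10 \<le> S \<and> 4 * m + 4 * k + 10 \<le> T"
  have SD: "2 * Dn m k + 2 \<le> S" using a by (simp add: Dn_def)
  have T: "4 * k + 7 \<le> T" using a by simp
  interpret g: gm r s S m k "T * pp S" "UU S (fl1 T)" "UU S (fl2 T)"
    using gm_U12[OF assms(1,2) SD T] .
  show "eqk r s S m k (Xword r s S T @ Xword r s S T) (Xword r s S T @ boldA r @ Xword r s S T)"
    using g.eqk_gm[OF assms(3)] by (simp add: W_U1 W_U2)
qed


end
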